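(* Let $n\ge 3$, let $m_1,m_2$ be positive integers with $m_1\mid m_2$, and let $F,R$ be as in the context. In $F/[R,F]$ the order of each of the following elements divides the stated number: (1) for $1\le i\le n-1$: $[s_i(1),s_i(x)]$ — $m_1$; (2) for $1\le i<j-1\le n-2$: $[s_i(1),s_j(1)]$ — $m_2$; $[s_i(x),s_j(x)][s_i(1),s_j(1)]^{-1}$ — $m_1$; $[s_i(x),s_j(1)][s_i(x),s_j(x)]^{-1}$ — $m_1$; $[s_i(1),s_j(x)][s_i(x),s_j(x)]^{-1}$ — $m_1$; (3) for $1\le i\le n-2$: $[s_i(1),s_{i+1}(x)][s_i(x),s_{i+1}(1)]^{-1}$ — $m_1$; $[s_i(x),s_{i+1}(x)][s_i(x),s_{i+1}(1)]^{-1}$ — $m_1$; (4) for $1\le i\le n-2$: $[s_i(1),s_{i+1}(1),s_i(1)]$ — $m_2$; $[s_i(1),s_{i+1}(1),s_{i+1}(1)s_i(1)^{-1}]$ — $\gcd(m_2,\binom{m_2}{2})$; $[s_i(1),s_{i+1}(1),s_i(x)s_i(1)^{-1}]$ — $m_1$; $[s_i(1),s_{i+1}(1),s_i(x)s_{i+1}(x)^{-1}(s_i(1)s_{i+1}(1)^{-1})^{-1}]$ — $\gcd(m_1,\binom{m_1}{2})$; (5) for $1\le i\le n-3$: $[s_i(1),s_{i+1}(1),s_{i+2}(1),s_{i+1}(1)]$ — $\gcd(2,m_2)$; $[s_i(1),s_{i+1}(1),s_{i+2}(1),s_{i+1}(x)s_{i+1}(1)^{-1}]$ — $\gcd(2,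m_1)$.
   Context: Commutator conventions: $[a,b]=a^{-1}b^{-1}ab$, $a^b=b^{-1}ab$, commutators left-normed: $[a_1,\dots,a_k]=[[a_1,\dots,a_{k-1}],a_k]$. Let $F$ be the free group on the $2(n-1)$ symbols $s_i(1),s_i(x)$, $1\le i\le n-1$. Write $s_i(1|x)$ for either of $s_i(1),s_i(x)$ (every choice is included). Let $R$ be the normal closure in $F$ of: $s_i(1)^{m_1}s_i(x)^{-m_1}$ and $s_i(x)^{m_2}$ ($1\le i\le n-1$); $[s_i(1),s_i(x)]$ ($1\le i\le n-1$); $[s_i(1|x),s_j(1|x)]$ ($1\le i<j-1\le n-2$); $[s_i(1|x)^{-1},s_{i+1}(x)^{-1}][s_i(x),s_{i+1}(1)]^{-1}$ ($1\le i\le n-2$); $[s_i(1|x),s_{i+1}(1),s_i(1)]$ and $[s_i(1|x),s_{i+1}(1),s_{i+1}(1)]$ ($1\le i\le n-2$); $[[s_i(1|x),s_{i+1}(1)],[s_{i+1}(1|x),s_{i+2}(1)]]$ ($1\le i\le n-3$). It is known that $F/R\cong\mathrm{UT}_n(\mathbb Z/m_1\mathbb Z\times\mathbb Z/m_2\mathbb Z)$ via $s_i(\lambda)\mapsto I+\lambda E_{i,i+1}$, where $1=(1,1)$ and $x=(0,1)$. *)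

theory Defs
  imports "HOL-Algebra.Algebra"
begin

text \<open>A letter is a pair (g, e) with g a generator and e = True meaning the inverse g^-1.\<close>

type_synonym 'g fword = "('g \<times> bool) list"

fun fred :: "'g fword \<Rightarrow> 'g fword" where
  "fred [] = []"
| "fred (x # xs) =
     (case fred xs of
        [] \<Rightarrow> [x]
      | y # ys \<Rightarrow> (if fst y = fst x \<and> snd y \<noteq> snd x then ys else x # y # ys))"

definition free_grp :: "'g set \<Rightarrow> 'g fword monoid" where
  "free_grp S = \<lparr> carrier = {w. fst ` set w \<subseteq> S \<and> fred w = w},
                  monoid.mult = (\<lambda>u v. fred (u @ v)),
                  one = [] \<rparr>"

definition fgen :: "'g \<Rightarrow> 'g fword" where
  "fgen g = [(g, False)]"

definition gcomm :: "('a, 'b) monoid_scheme \<Rightarrow> 'a \<Rightarrow> 'a \<Rightarrow> 'a" where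
  "gcomm G a b = inv\<^bsub>G\<^esub> a \<otimes>\<^bsub>G\<^esub> inv\<^bsub>G\<^esub> b \<otimes>\<^bsub>G\<^esub> a \<otimes>\<^bsub>G\<^esub> b"

definition gcomm3 :: "('a, 'b) monoid_scheme \<Rightarrow> 'a \<Rightarrow> 'a \<Rightarrow> 'a \<Rightarrow> 'a" where
  "gcomm3 G a b c = gcomm G (gcomm G a b) c"

definition gcomm4 :: "('a, 'b) monoid_scheme \<Rightarrow> 'a \<Rightarrow> 'a \<Rightarrow> 'a \<Rightarrow> 'a \<Rightarrow> 'a" where
  "gcomm4 G a b c d = gcomm G (gcomm3 G a b c) d"

text \<open>Generators: (i, False) is s_i(1), (i, True) is s_i(x), for 1 \<le> i \<le> n-1.\<close>

definition gens :: "nat \<Rightarrow> (nat \<times> bool) set" where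
  "gens n = {1..n-1} \<times> UNIV"

definition FF :: "nat \<Rightarrow> (nat \<times> bool) fword monoid" where
  "FF n = free_grp (gens n)"

definition sg :: "nat \<Rightarrow> bool \<Rightarrow> (nat \<times> bool) fword" where
  "sg i b = fgen (i, b)"

abbreviation s1 :: "nat \<Rightarrow> (nat \<times> bool) fword" where "s1 i \<equiv> sg i False"
abbreviation sx :: "nat \<Rightarrow> (nat \<times> bool) fword" where "sx i \<equiv> sg i True"

definition relators :: "nat \<Rightarrow> nat \<Rightarrow> nat \<Rightarrow> (nat \<times> bool) fword set" where
  "relators n m1 m2 = (
      {s1 i [^]\<^bsub>FF n\<^esub> m1 \<otimes>\<^bsub>FF n\<^esub> inv\<^bsub>FF n\<^esub> (sx i [^]\<^bsub>FF n\<^esub> m1) | i. 1 \<le> i \<and> i \<le> n - 1}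
    \<union> {sx i [^]\<^bsub>FF n\<^esub> m2 | i. 1 \<le> i \<and> i \<le> n - 1}
    \<union> {gcomm (FF n) (s1 i) (sx i) | i. 1 \<le> i \<and> i \<le> n - 1}
    \<union> {gcomm (FF n) (sg i a) (sg j b) | i j a b. 1 \<le> i \<and> i + 1 < j \<and> j \<le> n - 1}
    \<union> {gcomm (FF n) (inv\<^bsub>FF n\<^esub> (sg i a)) (inv\<^bsub>FF n\<^esub> (sx (i+1))) \<otimes>\<^bsub>FF n\<^esub>
          inv\<^bsub>FF n\<^esub> (gcomm (FF n) (sx i) (s1 (i+1))) | i a. 1 \<le> i \<and> i \<le> n - 2}
    \<union> {gcomm3 (FF n) (sg i a) (s1 (i+1)) (s1 i) | i a. 1 \<le> i \<and> i \<le> n - 2}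
    \<union> {gcomm3 (FF n) (sg i a) (s1 (i+1)) (s1 (i+1)) | i a. 1 \<le> i \<and> i \<le> n - 2}
    \<union> {gcomm (FF n) (gcomm (FF n) (sg i a) (s1 (i+1))) (gcomm (FF n) (sg (i+1) b) (s1 (i+2)))
          | i a b. 1 \<le> i \<and> i \<le> n - 3})"

definition normal_closure :: "('a, 'b) monoid_scheme \<Rightarrow> 'a set \<Rightarrow> 'a set" where
  "normal_closure G Y =
     generate G (\<Union>x \<in> Y. \<Union>y \<in> carrier G. {inv\<^bsub>G\<^esub> y \<otimes>\<^bsub>G\<^esub> x \<otimes>\<^bsub>G\<^esub> y})"

definition RR :: "nat \<Rightarrow> nat \<Rightarrow> nat \<Rightarrow> (nat \<times> bool) fword set" where
  "RR n m1 m2 = normal_closure (FF n) (relators n m1 m2)"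

definition RF :: "nat \<Rightarrow> nat \<Rightarrow> nat \<Rightarrow> (nat \<times> bool) fword set" where
  "RF n m1 m2 = generate (FF n)
     {gcomm (FF n) r f | r f. r \<in> RR n m1 m2 \<and> f \<in> carrier (FF n)}"

definition qord :: "nat \<Rightarrow> nat \<Rightarrow> nat \<Rightarrow> (nat \<times> bool) fword \<Rightarrow> nat" where
  "qord n m1 m2 w = group.ord (FF n Mod RF n m1 m2) (RF n m1 m2 #>\<^bsub>FF n\<^esub> w)"

end

theory Submission
  imports Defs
begin

definition fstep :: "'g \<times> bool \<Rightarrow> 'g fword \<Rightarrow> 'g fword" where
  "fstep x r = (case r of [] \<Rightarrow> [x] | y # ys \<Rightarrow> (if fst y = fst x \<and> snd y \<noteq> snd x then ys else x # y # ys))"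

lemma fred_Cons: "fred (x # xs) = fstep x (fred xs)"
  by (auto simp: fstep_def)

declare fred.simps(2)[simp del]

lemma fred_append: "fred (u @ v) = foldr fstep u (fred v)"
  by (induction u) (simp_all add: fred_Cons del: fred.simps(2))

lemma fred_length: "length (fred w) \<le> length w"
  by (induction w) (auto simp: fred_Cons fstep_def split: list.splits del: fred.simps(2))

lemma fred_tail: "fred (y # ys) = y # ys \<Longrightarrow> fred ys = ys"
proof (cases "fred ys")
  case Nil
  assume "fred (y # ys) = y # ys"
  then show ?thesis using Nil by (auto simp: fred_Cons fstep_def)
next
  case (Cons z zs)
  assume h: "fred (y # ys) = y # ys"
  show ?thesis
  proof (cases "fst z = fst y \<and> snd z \<noteq> snd y")
    case True
    hence "zs = y # ys" using h Cons by (auto simp: fred_Cons fstep_def)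
    then show ?thesis using fred_length[of ys] Cons by simp
  next
    case False
    then show ?thesis using h Cons by (auto simp: fred_Cons fstep_def)
  qed
qed

definition flip :: "'g \<times> bool \<Rightarrow> 'g \<times> bool" where "flip x = (fst x, \<not> snd x)"

lemma fred_fred: "fred (fred w) = fred w"
proof (induction w)
  case Nil then show ?case by simp
next
  case (Cons x w)
  show ?case
  proof (cases "fred w")
    case Nil then show ?thesis by (auto simp: fred_Cons fstep_def)
  next
    case (Cons y ys)
    have fy: "fred (y#ys) = y # ys" using Cons.IH Cons by simp
    hence fys: "fred ys = ys" by (rule fred_tail)
    show ?thesis
    proof (cases "fst y = fst x \<and> snd y \<noteq> snd x")
      case True then show ?thesis using Cons fys by (auto simp: fred_Cons fstep_def)
    next
      case False
      then show ?thesis using Cons fy by (auto simp: fred_Cons fstep_def)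
    qed
  qed
qed

lemma fstep_cancel:
  assumes "fred t = t" "fst y = fst x" "snd y \<noteq> snd x"
  shows "fstep x (fstep y t) = t"
proof (cases t)
  case Nil then show ?thesis using assms by (auto simp: fstep_def)
next
  case (Cons z zs)
  show ?thesis
  proof (cases "fst z = fst y \<and> snd z \<noteq> snd y")
    case True
    hence zx: "z = x" using assms by (cases z, cases x, cases y) auto
    have fz: "fred (z#zs) = z#zs" using assms Cons by simp
    hence fzs: "fred zs = zs" by (rule fred_tail)
    have "fstep x zs = x # zs"
    proof (cases zs)
      case Nil then show ?thesis by (auto simp: fstep_def)
    next
      case (Cons w ws)
      have "\<not> (fst w = fst x \<and> snd w \<noteq> snd x)"
        using fz fzs Cons zx by (auto simp: fred_Cons fstep_def split: if_splits)
      then show ?thesis using Cons by (auto simp: fstep_def)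
    qed
    then show ?thesis using True Cons zx by (auto simp: fstep_def)
  next
    case False
    then show ?thesis using Cons assms by (auto simp: fstep_def)
  qed
qed

lemma fred_reduced_fstep: "fred r = r \<Longrightarrow> fred (fstep x r) = fstep x r"
  by (metis fred_Cons fred_fred)

lemma foldr_fstep_reduced: "fred r = r \<Longrightarrow> fred (foldr fstep u r) = foldr fstep u r"
  by (metis fred_append fred_fred)

lemma foldr_fred:
  assumes "fred r = r" shows "foldr fstep u r = foldr fstep (fred u) r"
proof (induction u)
  case Nil then show ?case by simp
next
  case (Cons x u)
  have key: "foldr fstep (fstep x s) r = fstep x (foldr fstep s r)" if "fred s = s" for s
  proof (cases s)
    case Nil then show ?thesis by (auto simp: fstep_def)
  next
    case (Cons y ys)
    show ?thesis
    proof (cases "fst y = fst x \<and> snd y \<noteq> snd x")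
      case True
      have "fred ys = ys" using that Cons fred_tail by blast
      hence "fred (foldr fstep ys r) = foldr fstep ys r" using assms foldr_fstep_reduced by blast
      hence "fstep x (fstep y (foldr fstep ys r)) = foldr fstep ys r"
        using True fstep_cancel by metis
      then show ?thesis using True Cons by (auto simp: fstep_def)
    next
      case False then show ?thesis using Cons by (auto simp: fstep_def)
    qed
  qed
  show ?case using Cons key[of "fred u"] by (simp add: fred_Cons fred_fred)
qed

lemma fred_left: "fred (fred u @ v) = fred (u @ v)"
  by (simp add: fred_append foldr_fred[OF fred_fred, symmetric])

lemma fred_right: "fred (u @ fred v) = fred (u @ v)"
  by (simp add: fred_append fred_fred)

lemma fred_cancel_pair: "fred (u @ [x, flip x] @ v) = fred (u @ v)"
proof -
  have "fred ([x, flip x] @ v) = fred v"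
    using fstep_cancel[OF fred_fred, of "flip x" x v] by (simp add: fred_Cons flip_def fstep_def)
  thus ?thesis by (metis fred_right)
qed

lemma fred_cancel_word: "fred (u @ w @ rev (map flip w) @ v) = fred (u @ v)"
proof (induction w arbitrary: u v)
  case Nil then show ?case by simp
next
  case (Cons x w)
  have "fred (u @ (x # w) @ rev (map flip (x # w)) @ v)
      = fred ((u @ [x]) @ w @ rev (map flip w) @ ([flip x] @ v))" by simp
  also have "\<dots> = fred ((u @ [x]) @ [flip x] @ v)" using Cons.IH[of "u @ [x]" "[flip x] @ v"] by simp
  also have "\<dots> = fred (u @ v)" using fred_cancel_pair[of u x v] by simp
  finally show ?case .
qed

lemma fred_set: "set (fred w) \<subseteq> set w"
  by (induction w) (auto simp: fstep_def fred_Cons split: list.splits if_splits)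

lemma group_free_grp: "group (free_grp S)"
proof (rule groupI)
  fix x y assume "x \<in> carrier (free_grp S)" "y \<in> carrier (free_grp S)"
  thus "x \<otimes>\<^bsub>free_grp S\<^esub> y \<in> carrier (free_grp S)"
    using fred_set[of "x @ y"] by (force simp: free_grp_def fred_fred)
next
  show "\<one>\<^bsub>free_grp S\<^esub> \<in> carrier (free_grp S)" by (simp add: free_grp_def)
next
  fix x y z assume "x \<in> carrier (free_grp S)" "y \<in> carrier (free_grp S)" "z \<in> carrier (free_grp S)"
  thus "x \<otimes>\<^bsub>free_grp S\<^esub> y \<otimes>\<^bsub>free_grp S\<^esub> z = x \<otimes>\<^bsub>free_grp S\<^esub> (y \<otimes>\<^bsub>free_grp S\<^esub> z)"
    by (simp add: free_grp_def fred_left fred_right)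
next
  fix x assume "x \<in> carrier (free_grp S)"
  thus "\<one>\<^bsub>free_grp S\<^esub> \<otimes>\<^bsub>free_grp S\<^esub> x = x" by (simp add: free_grp_def)
next
  fix x assume x: "x \<in> carrier (free_grp S)"
  let ?y = "fred (rev (map flip x))"
  have "fred (?y @ x) = []"
    using fred_cancel_word[of "[]" "rev (map flip x)" "[]"] fred_left[of "map flip (rev x)" x]
    by (simp add: rev_map flip_def o_def)
  moreover have "?y \<in> carrier (free_grp S)"
    using x fred_set[of "rev (map flip x)"] by (force simp: free_grp_def fred_fred flip_def)
  ultimately show "\<exists>y\<in>carrier (free_grp S). y \<otimes>\<^bsub>free_grp S\<^esub> x = \<one>\<^bsub>free_grp S\<^esub>"
    by (auto simp: free_grp_def)
qed

lemma group_FF: "group (FF n)"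
  by (simp add: FF_def group_free_grp)

lemma sg_carrier: "1 \<le> i \<Longrightarrow> i \<le> n - 1 \<Longrightarrow> sg i b \<in> carrier (FF n)"
  by (simp add: FF_def free_grp_def sg_def fgen_def gens_def fred_Cons fstep_def)

context group begin

lemma cancelA: "x \<in> carrier G \<Longrightarrow> y \<in> carrier G \<Longrightarrow> x \<otimes> (inv x \<otimes> y) = y"
  by (simp add: m_assoc[symmetric])
lemma cancelB: "x \<in> carrier G \<Longrightarrow> y \<in> carrier G \<Longrightarrow> inv x \<otimes> (x \<otimes> y) = y"
  by (simp add: m_assoc[symmetric])

lemmas gsimp = m_assoc inv_mult_group cancelA cancelB

lemma gcomm_closed [simp]: "x \<in> carrier G \<Longrightarrow> y \<in> carrier G \<Longrightarrow> gcomm G x y \<in> carrier G"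
  by (simp add: gcomm_def)

lemma hall_witt:
  assumes "x \<in> carrier G" "y \<in> carrier G" "z \<in> carrier G"
  shows "(inv y \<otimes> gcomm G (gcomm G x (inv y)) z \<otimes> y) \<otimes> (inv z \<otimes> gcomm G (gcomm G y (inv z)) x \<otimes> z)
       \<otimes> (inv x \<otimes> gcomm G (gcomm G z (inv x)) y \<otimes> x) = \<one>"
  using assms by (simp add: gcomm_def gsimp)

definition cent :: "'a \<Rightarrow> bool" where
  "cent x \<longleftrightarrow> x \<in> carrier G \<and> (\<forall>y\<in>carrier G. x \<otimes> y = y \<otimes> x)"

lemma centD: "cent x \<Longrightarrow> x \<in> carrier G" by (simp add: cent_def)
lemma cent_comm: "cent x \<Longrightarrow> y \<in> carrier G \<Longrightarrow> x \<otimes> y = y \<otimes> x" by (simp add: cent_def)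
lemma cent_swap: "cent k \<Longrightarrow> x \<in> carrier G \<Longrightarrow> t \<in> carrier G \<Longrightarrow> x \<otimes> (k \<otimes> t) = k \<otimes> (x \<otimes> t)"
  by (metis cent_comm centD m_assoc)
lemma cent_one [simp]: "cent \<one>" by (simp add: cent_def)
lemma cent_mult: "cent x \<Longrightarrow> cent y \<Longrightarrow> cent (x \<otimes> y)"
  unfolding cent_def by (metis m_assoc m_closed)
lemma cent_inv: "cent x \<Longrightarrow> cent (inv x)"
proof -
  assume c: "cent x"
  have x: "x \<in> carrier G" using c centD by blast
  have "inv x \<otimes> y = y \<otimes> inv x" if y: "y \<in> carrier G" for y
  proof -
    have "inv x \<otimes> y = inv x \<otimes> (y \<otimes> x) \<otimes> inv x" using x y by (simp add: gsimp)
    also have "\<dots> = inv x \<otimes> (x \<otimes> y) \<otimes> inv x" using cent_comm[OF c y] by simp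
    also have "\<dots> = y \<otimes> inv x" using x y by (simp add: gsimp)
    finally show ?thesis .
  qed
  thus ?thesis using x by (simp add: cent_def)
qed
lemma cent_pow: "cent x \<Longrightarrow> cent (x [^] (k::nat))"
  by (induction k) (auto simp: cent_mult)
lemma conj_cent: "cent z \<Longrightarrow> g \<in> carrier G \<Longrightarrow> inv g \<otimes> z \<otimes> g = z"
  by (metis cent_comm centD inv_closed m_assoc cancelB)
lemma conj_cent': "cent z \<Longrightarrow> g \<in> carrier G \<Longrightarrow> g \<otimes> z \<otimes> inv g = z"
  by (metis conj_cent inv_closed inv_inv)

lemma gcomm_one_iff: "x \<in> carrier G \<Longrightarrow> y \<in> carrier G \<Longrightarrow> gcomm G x y = \<one> \<longleftrightarrow> x \<otimes> y = y \<otimes> x"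
proof -
  assume x: "x \<in> carrier G" and y: "y \<in> carrier G"
  have e: "gcomm G x y = inv (y \<otimes> x) \<otimes> (x \<otimes> y)" using x y by (simp add: gcomm_def gsimp)
  show ?thesis
  proof
    assume "gcomm G x y = \<one>"
    hence "(y \<otimes> x) \<otimes> (inv (y \<otimes> x) \<otimes> (x \<otimes> y)) = y \<otimes> x" using e x y by simp
    thus "x \<otimes> y = y \<otimes> x" using x y by (simp add: gsimp)
  next
    assume "x \<otimes> y = y \<otimes> x"
    thus "gcomm G x y = \<one>" using e x y by simp
  qed
qed

lemma gcomm_one_r [simp]: "x \<in> carrier G \<Longrightarrow> gcomm G x \<one> = \<one>"
  by (simp add: gcomm_one_iff)
lemma gcomm_one_l [simp]: "x \<in> carrier G \<Longrightarrow> gcomm G \<one> x = \<one>"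
  by (simp add: gcomm_one_iff)
lemma zero_choose2 [simp]: "(0::nat) choose 2 = 0" by simp

lemma gcomm_cent_l: "cent z \<Longrightarrow> y \<in> carrier G \<Longrightarrow> gcomm G z y = \<one>"
  by (simp add: gcomm_one_iff centD cent_comm)
lemma gcomm_cent_r: "cent z \<Longrightarrow> y \<in> carrier G \<Longrightarrow> gcomm G y z = \<one>"
  by (simp add: gcomm_one_iff centD cent_comm)

lemma gcomm_centmul_l: "cent k \<Longrightarrow> y \<in> carrier G \<Longrightarrow> w \<in> carrier G \<Longrightarrow> gcomm G (k \<otimes> y) w = gcomm G y w"
  unfolding gcomm_def using centD[of k] cent_swap[of k "inv w" "y \<otimes> w"] cent_inv[of k]
  by (simp add: gsimp)
lemma gcomm_centmul_r: "cent k \<Longrightarrow> y \<in> carrier G \<Longrightarrow> w \<in> carrier G \<Longrightarrow> gcomm G w (k \<otimes> y) = gcomm G w y"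
proof -
  assume k: "cent k" and y: "y \<in> carrier G" and w: "w \<in> carrier G"
  have 1: "inv k \<otimes> (w \<otimes> t) = w \<otimes> (inv k \<otimes> t)" if "t \<in> carrier G" for t
    using cent_swap[OF cent_inv[OF k] w that] by simp
  have 2: "k \<otimes> (y \<otimes> t) = y \<otimes> (k \<otimes> t)" if "t \<in> carrier G" for t
    using cent_swap[OF k y that] by simp
  show ?thesis unfolding gcomm_def using k y w centD[OF k]
    by (simp add: gsimp 1 2[symmetric])
qed

lemma gcomm_eqz_l: "cent (x \<otimes> inv y) \<Longrightarrow> x \<in> carrier G \<Longrightarrow> y \<in> carrier G \<Longrightarrow> w \<in> carrier G \<Longrightarrow>
   gcomm G x w = gcomm G y w"
  using gcomm_centmul_l[of "x \<otimes> inv y" y w] by (simp add: gsimp)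
lemma gcomm_eqz_r: "cent (x \<otimes> inv y) \<Longrightarrow> x \<in> carrier G \<Longrightarrow> y \<in> carrier G \<Longrightarrow> w \<in> carrier G \<Longrightarrow>
   gcomm G w x = gcomm G w y"
  using gcomm_centmul_r[of "x \<otimes> inv y" y w] by (simp add: gsimp)

lemma gcomm_inv_swap: "x \<in> carrier G \<Longrightarrow> y \<in> carrier G \<Longrightarrow> inv (gcomm G x y) = gcomm G y x"
  by (simp add: gcomm_def gsimp)

lemma gcomm_mult_r: "x \<in> carrier G \<Longrightarrow> y \<in> carrier G \<Longrightarrow> z \<in> carrier G \<Longrightarrow>
  gcomm G x (y \<otimes> z) = gcomm G x z \<otimes> (inv z \<otimes> gcomm G x y \<otimes> z)"
  by (simp add: gcomm_def gsimp)
lemma gcomm_mult_l: "x \<in> carrier G \<Longrightarrow> y \<in> carrier G \<Longrightarrow> z \<in> carrier G \<Longrightarrow>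
  gcomm G (x \<otimes> y) z = (inv y \<otimes> gcomm G x z \<otimes> y) \<otimes> gcomm G y z"
  by (simp add: gcomm_def gsimp)
lemma conj_comm: "x \<in> carrier G \<Longrightarrow> g \<in> carrier G \<Longrightarrow> inv g \<otimes> x \<otimes> g = x \<otimes> gcomm G x g"
  by (simp add: gcomm_def gsimp)
lemma gcomm_inv_r: "x \<in> carrier G \<Longrightarrow> y \<in> carrier G \<Longrightarrow> gcomm G x (inv y) = y \<otimes> inv (gcomm G x y) \<otimes> inv y"
  by (simp add: gcomm_def gsimp)
lemma gcomm_inv_l: "x \<in> carrier G \<Longrightarrow> y \<in> carrier G \<Longrightarrow> gcomm G (inv x) y = x \<otimes> inv (gcomm G x y) \<otimes> inv x"
  by (simp add: gcomm_def gsimp)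

lemma gcomm_inv_r_c: "cent (gcomm G x y) \<Longrightarrow> x \<in> carrier G \<Longrightarrow> y \<in> carrier G \<Longrightarrow> gcomm G x (inv y) = inv (gcomm G x y)"
  by (metis gcomm_inv_r conj_cent' cent_inv inv_inv inv_closed)
lemma gcomm_inv_l_c: "cent (gcomm G x y) \<Longrightarrow> x \<in> carrier G \<Longrightarrow> y \<in> carrier G \<Longrightarrow> gcomm G (inv x) y = inv (gcomm G x y)"
  by (metis gcomm_inv_l conj_cent' cent_inv)
lemma gcomm_mult_r_c: "cent (gcomm G x y) \<Longrightarrow> x \<in> carrier G \<Longrightarrow> y \<in> carrier G \<Longrightarrow> z \<in> carrier G \<Longrightarrow>
  gcomm G x (y \<otimes> z) = gcomm G x z \<otimes> gcomm G x y"
  by (simp add: gcomm_mult_r conj_cent)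
lemma gcomm_mult_l_c: "cent (gcomm G x z) \<Longrightarrow> x \<in> carrier G \<Longrightarrow> y \<in> carrier G \<Longrightarrow> z \<in> carrier G \<Longrightarrow>
  gcomm G (x \<otimes> y) z = gcomm G x z \<otimes> gcomm G y z"
  by (simp add: gcomm_mult_l conj_cent)

lemma conj_pow: "x \<in> carrier G \<Longrightarrow> g \<in> carrier G \<Longrightarrow> inv g \<otimes> x [^] (k::nat) \<otimes> g = (inv g \<otimes> x \<otimes> g) [^] k"
proof (induction k)
  case 0 then show ?case by simp
next
  case (Suc k)
  have "inv g \<otimes> x [^] Suc k \<otimes> g = (inv g \<otimes> x [^] k \<otimes> g) \<otimes> (inv g \<otimes> x \<otimes> g)"
    using Suc.prems by (simp add: gsimp)
  then show ?case using Suc by simp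
qed

lemma pow_mult_cent: "cent u \<Longrightarrow> v \<in> carrier G \<Longrightarrow> (v \<otimes> u) [^] (k::nat) = v [^] k \<otimes> u [^] k"
proof (induction k)
  case 0 then show ?case by simp
next
  case (Suc k)
  have u: "u \<in> carrier G" using Suc centD by auto
  have "(v \<otimes> u) [^] Suc k = v [^] k \<otimes> u [^] k \<otimes> (v \<otimes> u)" using Suc by simp
  also have "\<dots> = v [^] k \<otimes> (u [^] k \<otimes> v) \<otimes> u" using Suc u by (simp add: gsimp)
  also have "\<dots> = v [^] k \<otimes> (v \<otimes> u [^] k) \<otimes> u" using Suc u cent_comm[OF cent_pow[OF Suc(2)], of v] by simp
  also have "\<dots> = v [^] Suc k \<otimes> u [^] Suc k" using Suc u by (simp add: gsimp)
  finally show ?case .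
qed

lemma pow_mult_cent': "cent u \<Longrightarrow> v \<in> carrier G \<Longrightarrow> (u \<otimes> v) [^] (k::nat) = u [^] k \<otimes> v [^] k"
proof -
  assume a: "cent u" "v \<in> carrier G"
  have "u \<otimes> v = v \<otimes> u" using cent_comm[OF a] .
  thus ?thesis using pow_mult_cent[OF a, of k] cent_comm[OF cent_pow[OF a(1)], of "v [^] k" k] a by simp
qed

lemma pow_inv: "x \<in> carrier G \<Longrightarrow> inv x [^] (k::nat) = inv (x [^] k)"
  by (simp add: nat_pow_inv)

lemma choose2_Suc: "Suc k choose 2 = k + (k choose 2)"
  by (simp add: numeral_2_eq_2)

lemma gcomm_pow2_r:
  assumes x: "x \<in> carrier G" and y: "y \<in> carrier G" and c: "cent (gcomm G (gcomm G x y) y)"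
  shows "gcomm G x (y [^] (k::nat)) = gcomm G x y [^] k \<otimes> gcomm G (gcomm G x y) y [^] (k choose 2)"
proof (induction k)
  case 0 then show ?case using x y c centD by (simp add: gcomm_one_iff)
next
  case (Suc k)
  let ?c = "gcomm G x y" and ?p = "gcomm G (gcomm G x y) y"
  have p: "?p \<in> carrier G" using c centD by blast
  have cc: "?c \<in> carrier G" using x y by simp
  have "gcomm G x (y [^] Suc k) = gcomm G x (y [^] k \<otimes> y)" by simp
  also have "\<dots> = ?c \<otimes> (inv y \<otimes> gcomm G x (y [^] k) \<otimes> y)" using gcomm_mult_r x y by simp
  also have "\<dots> = ?c \<otimes> (inv y \<otimes> ?c [^] k \<otimes> y \<otimes> (inv y \<otimes> ?p [^] (k choose 2) \<otimes> y))"
    using Suc x y p cc by (simp add: gsimp)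
  also have "\<dots> = ?c \<otimes> ((?c \<otimes> ?p) [^] k \<otimes> ?p [^] (k choose 2))"
    using conj_pow[OF cc y] conj_comm[OF cc y] conj_cent[OF cent_pow[OF c] y] by simp
  also have "\<dots> = ?c \<otimes> (?c [^] k \<otimes> ?p [^] k \<otimes> ?p [^] (k choose 2))"
    using pow_mult_cent[OF c cc] by simp
  also have "\<dots> = (?c \<otimes> ?c [^] k) \<otimes> (?p [^] k \<otimes> ?p [^] (k choose 2))"
    using p cc by (simp add: gsimp)
  also have "\<dots> = ?c [^] Suc k \<otimes> ?p [^] (Suc k choose 2)"
    using nat_pow_Suc2[OF cc, of k, symmetric] nat_pow_mult[OF p, of k "k choose 2"] by (simp add: choose2_Suc)
  finally show ?case .
qed

lemma gcomm_pow2_l: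
  assumes x: "x \<in> carrier G" and y: "y \<in> carrier G" and c: "cent (gcomm G (gcomm G x y) x)"
  shows "gcomm G (x [^] (k::nat)) y = gcomm G x y [^] k \<otimes> gcomm G (gcomm G x y) x [^] (k choose 2)"
proof (induction k)
  case 0 then show ?case using x y c centD by (simp add: gcomm_one_iff)
next
  case (Suc k)
  let ?c = "gcomm G x y" and ?p = "gcomm G (gcomm G x y) x"
  have p: "?p \<in> carrier G" using c centD by blast
  have cc: "?c \<in> carrier G" using x y by simp
  have "gcomm G (x [^] Suc k) y = gcomm G (x [^] k \<otimes> x) y" by simp
  also have "\<dots> = (inv x \<otimes> gcomm G (x [^] k) y \<otimes> x) \<otimes> ?c" using gcomm_mult_l x y by simp
  also have "\<dots> = (inv x \<otimes> ?c [^] k \<otimes> x \<otimes> (inv x \<otimes> ?p [^] (k choose 2) \<otimes> x)) \<otimes> ?c"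
    using Suc x y p cc by (simp add: gsimp)
  also have "\<dots> = ((?c \<otimes> ?p) [^] k \<otimes> ?p [^] (k choose 2)) \<otimes> ?c"
    using conj_pow[OF cc x] conj_comm[OF cc x] conj_cent[OF cent_pow[OF c] x] by simp
  also have "\<dots> = ?c [^] k \<otimes> (?p [^] k \<otimes> ?p [^] (k choose 2) \<otimes> ?c)"
    using pow_mult_cent[OF c cc] p cc by (simp add: gsimp)
  also have "\<dots> = ?c [^] k \<otimes> (?c \<otimes> (?p [^] k \<otimes> ?p [^] (k choose 2)))"
    using cent_comm[OF cent_mult[OF cent_pow[OF c] cent_pow[OF c]] cc, of k "k choose 2"] by simp
  also have "\<dots> = (?c [^] k \<otimes> ?c) \<otimes> (?p [^] k \<otimes> ?p [^] (k choose 2))"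
    using p cc by (simp add: gsimp)
  also have "\<dots> = ?c [^] Suc k \<otimes> ?p [^] (Suc k choose 2)"
    using nat_pow_mult[OF p, of k "k choose 2"] by (simp add: choose2_Suc)
  finally show ?case .
qed

lemma gcomm_pow_r: "cent (gcomm G x y) \<Longrightarrow> x \<in> carrier G \<Longrightarrow> y \<in> carrier G \<Longrightarrow>
   gcomm G x (y [^] (k::nat)) = gcomm G x y [^] k"
  using gcomm_pow2_r[of x y k] gcomm_cent_l[of "gcomm G x y" y] by simp
lemma gcomm_pow_l: "cent (gcomm G x y) \<Longrightarrow> x \<in> carrier G \<Longrightarrow> y \<in> carrier G \<Longrightarrow>
   gcomm G (x [^] (k::nat)) y = gcomm G x y [^] k"
  using gcomm_pow2_l[of x y k] gcomm_cent_l[of "gcomm G x y" x] by simp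

lemma pow_gcd_one: "x \<in> carrier G \<Longrightarrow> x [^] (a::nat) = \<one> \<Longrightarrow> x [^] (b::nat) = \<one> \<Longrightarrow> x [^] gcd a b = \<one>"
  by (simp add: pow_eq_id)

lemma prodpow:
  assumes x: "x \<in> carrier G" and y: "y \<in> carrier G" and c: "cent (gcomm G x y)"
  shows "(x \<otimes> y) [^] (k::nat) = x [^] k \<otimes> y [^] k \<otimes> gcomm G y x [^] (k choose 2)"
proof (induction k)
  case 0 then show ?case by simp
next
  case (Suc k)
  let ?w = "gcomm G y x"
  have cw: "cent ?w" using c gcomm_inv_swap[OF x y] cent_inv by metis
  have w: "?w \<in> carrier G" using x y by simp
  have sw: "y [^] k \<otimes> x = x \<otimes> y [^] k \<otimes> ?w [^] k"
  proof -
    have "y [^] k \<otimes> x = x \<otimes> y [^] k \<otimes> gcomm G (y [^] k) x" using x y by (simp add: gcomm_def gsimp)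
    thus ?thesis using gcomm_pow_l[OF cw y x, of k] by simp
  qed
  have "(x \<otimes> y) [^] Suc k = x [^] k \<otimes> y [^] k \<otimes> ?w [^] (k choose 2) \<otimes> (x \<otimes> y)" using Suc by simp
  also have "\<dots> = x [^] k \<otimes> (y [^] k \<otimes> x) \<otimes> y \<otimes> ?w [^] (k choose 2)"
    using x y w cent_comm[OF cent_pow[OF cw, of "k choose 2"], of "x \<otimes> y"] by (simp add: gsimp)
  also have "\<dots> = x [^] k \<otimes> x \<otimes> y [^] k \<otimes> (?w [^] k \<otimes> y) \<otimes> ?w [^] (k choose 2)"
    using sw x y w by (simp add: gsimp)
  also have "\<dots> = x [^] k \<otimes> x \<otimes> y [^] k \<otimes> (y \<otimes> ?w [^] k) \<otimes> ?w [^] (k choose 2)"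
    using cent_comm[OF cent_pow[OF cw, of k], of y] y by simp
  also have "\<dots> = x [^] Suc k \<otimes> y [^] Suc k \<otimes> ?w [^] (Suc k choose 2)"
    using x y w nat_pow_mult[OF w, of k "k choose 2"] by (simp add: gsimp choose2_Suc)
  finally show ?case .
qed

definition Zc :: "'a set" where "Zc = {x. cent x}"

lemma Zc_normal: "Zc \<lhd> G"
proof -
  have sg: "subgroup Zc G"
    by (rule subgroupI) (auto simp: Zc_def centD cent_mult cent_inv intro: exI[of _ \<one>])
  show ?thesis
  proof (rule normal_invI[OF sg])
    fix x h assume "x \<in> carrier G" "h \<in> Zc"
    thus "x \<otimes> h \<otimes> inv x \<in> Zc" by (simp add: Zc_def conj_cent')
  qed
qed

abbreviation "bar \<equiv> G Mod Zc"
definition pi :: "'a \<Rightarrow> 'a set" where "pi x = Zc #> x"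

lemma group_bar: "group bar"
  using Zc_normal normal.factorgroup_is_group by blast

lemma pi_hom: "group_hom G bar pi"
  unfolding group_hom_def group_hom_axioms_def
  using group_bar is_group normal.r_coset_hom_Mod[OF Zc_normal] pi_def[abs_def] by simp

lemma pi_one_iff: "x \<in> carrier G \<Longrightarrow> pi x = \<one>\<^bsub>bar\<^esub> \<longleftrightarrow> cent x"
proof -
  assume x: "x \<in> carrier G"
  have sg: "subgroup Zc G" using Zc_normal normal_imp_subgroup by blast
  show ?thesis
  proof
    assume "pi x = \<one>\<^bsub>bar\<^esub>"
    hence "Zc #> x = Zc" by (simp add: pi_def)
    thus "cent x" using rcos_self[OF x sg] by (simp add: Zc_def)
  next
    assume "cent x"
    thus "pi x = \<one>\<^bsub>bar\<^esub>" using coset_join2[OF x sg] by (simp add: pi_def Zc_def)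
  qed
qed

lemma pi_eq_iff: "x \<in> carrier G \<Longrightarrow> y \<in> carrier G \<Longrightarrow> pi x = pi y \<longleftrightarrow> cent (x \<otimes> inv y)"
proof -
  assume x: "x \<in> carrier G" and y: "y \<in> carrier G"
  interpret h: group_hom G bar pi by (rule pi_hom)
  have "pi (x \<otimes> inv y) = pi x \<otimes>\<^bsub>bar\<^esub> inv\<^bsub>bar\<^esub> (pi y)" using x y by simp
  hence "cent (x \<otimes> inv y) \<longleftrightarrow> pi x \<otimes>\<^bsub>bar\<^esub> inv\<^bsub>bar\<^esub> (pi y) = \<one>\<^bsub>bar\<^esub>"
    using pi_one_iff[of "x \<otimes> inv y"] x y by simp
  also have "\<dots> \<longleftrightarrow> pi x = pi y"
    using x y h.H.inv_equality h.H.inv_inv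
    by (metis h.H.inv_closed h.H.r_inv h.H.inv_solve_right h.H.l_one h.hom_closed)
  finally show ?thesis by simp
qed

lemma pi_gcomm: "x \<in> carrier G \<Longrightarrow> y \<in> carrier G \<Longrightarrow> pi (gcomm G x y) = gcomm bar (pi x) (pi y)"
proof -
  assume x: "x \<in> carrier G" and y: "y \<in> carrier G"
  interpret h: group_hom G bar pi by (rule pi_hom)
  show ?thesis using x y by (simp add: gcomm_def)
qed

lemma cent_of_bar: "x \<in> carrier G \<Longrightarrow> pi x = \<one>\<^bsub>bar\<^esub> \<Longrightarrow> cent x"
  using pi_one_iff by blast

end

context group begin

lemma comm_iff: "x \<in> carrier G \<Longrightarrow> y \<in> carrier G \<Longrightarrow> gcomm G x y = \<one> \<longleftrightarrow> x \<otimes> y = y \<otimes> x"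
  by (rule gcomm_one_iff)

lemma comm_sym: "x \<in> carrier G \<Longrightarrow> y \<in> carrier G \<Longrightarrow> gcomm G x y = \<one> \<Longrightarrow> gcomm G y x = \<one>"
  by (simp add: comm_iff)

lemma comm_inv_r: "x \<in> carrier G \<Longrightarrow> y \<in> carrier G \<Longrightarrow> gcomm G x y = \<one> \<Longrightarrow> gcomm G x (inv y) = \<one>"
  using gcomm_inv_r by simp
lemma comm_inv_l: "x \<in> carrier G \<Longrightarrow> y \<in> carrier G \<Longrightarrow> gcomm G x y = \<one> \<Longrightarrow> gcomm G (inv x) y = \<one>"
  using gcomm_inv_l by simp
lemma comm_mult_r: "x \<in> carrier G \<Longrightarrow> y \<in> carrier G \<Longrightarrow> z \<in> carrier G \<Longrightarrow>
    gcomm G x y = \<one> \<Longrightarrow> gcomm G x z = \<one> \<Longrightarrow> gcomm G x (y \<otimes> z) = \<one>"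
  using gcomm_mult_r by simp
lemma comm_mult_l: "x \<in> carrier G \<Longrightarrow> y \<in> carrier G \<Longrightarrow> z \<in> carrier G \<Longrightarrow>
    gcomm G x z = \<one> \<Longrightarrow> gcomm G y z = \<one> \<Longrightarrow> gcomm G (x \<otimes> y) z = \<one>"
  using gcomm_mult_l by simp
lemma comm_conj: "x \<in> carrier G \<Longrightarrow> g \<in> carrier G \<Longrightarrow> gcomm G x g = \<one> \<Longrightarrow> inv g \<otimes> x \<otimes> g = x"
  using conj_comm by simp
lemma comm_conj': "x \<in> carrier G \<Longrightarrow> g \<in> carrier G \<Longrightarrow> gcomm G x g = \<one> \<Longrightarrow> g \<otimes> x \<otimes> inv g = x"
  using comm_conj[of x "inv g"] comm_inv_r by simp

lemma gcomm_invinv: "x \<in> carrier G \<Longrightarrow> y \<in> carrier G \<Longrightarrow>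
   gcomm G (inv x) (inv y) = (x \<otimes> y) \<otimes> gcomm G x y \<otimes> inv (x \<otimes> y)"
  by (simp add: gcomm_def gsimp)
lemma gcomm_conj: "x \<in> carrier G \<Longrightarrow> y \<in> carrier G \<Longrightarrow> g \<in> carrier G \<Longrightarrow>
   inv g \<otimes> gcomm G x y \<otimes> g = gcomm G (inv g \<otimes> x \<otimes> g) (inv g \<otimes> y \<otimes> g)"
  by (simp add: gcomm_def gsimp)
lemma gcomm_conj': "x \<in> carrier G \<Longrightarrow> y \<in> carrier G \<Longrightarrow> g \<in> carrier G \<Longrightarrow>
   g \<otimes> gcomm G x y \<otimes> inv g = gcomm G (g \<otimes> x \<otimes> inv g) (g \<otimes> y \<otimes> inv g)"
  by (simp add: gcomm_def gsimp)

lemma conj_eq_one: "x \<in> carrier G \<Longrightarrow> g \<in> carrier G \<Longrightarrow> inv g \<otimes> x \<otimes> g = \<one> \<Longrightarrow> x = \<one>"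
proof -
  assume x: "x \<in> carrier G" and g: "g \<in> carrier G" and e: "inv g \<otimes> x \<otimes> g = \<one>"
  have "x = g \<otimes> (inv g \<otimes> x \<otimes> g) \<otimes> inv g" using x g by (simp add: gsimp)
  thus ?thesis using e g by simp
qed

lemma conj_one: "g \<in> carrier G \<Longrightarrow> inv g \<otimes> \<one> \<otimes> g = \<one>" by simp

lemma QB1:
  assumes a: "a \<in> carrier G" and b: "b \<in> carrier G" and a1: "a1 \<in> carrier G" and b1: "b1 \<in> carrier G"
    and ab: "gcomm G a b = \<one>" and a1b1: "gcomm G a1 b1 = \<one>"
    and r5a: "gcomm G (inv a) (inv b1) \<otimes> inv (gcomm G b a1) = \<one>"
    and r5b: "gcomm G (inv b) (inv b1) \<otimes> inv (gcomm G b a1) = \<one>"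
    and r6a: "gcomm G (gcomm G a a1) a = \<one>" and r6b: "gcomm G (gcomm G b a1) a = \<one>"
    and r6c: "gcomm G (gcomm G a a1) a1 = \<one>" and r6d: "gcomm G (gcomm G b a1) a1 = \<one>"
  shows "gcomm G (gcomm G a a1) b = \<one> \<and> gcomm G (gcomm G a a1) b1 = \<one>
    \<and> gcomm G (gcomm G b a1) b = \<one> \<and> gcomm G (gcomm G b a1) b1 = \<one>
    \<and> gcomm G a b1 = gcomm G b a1 \<and> gcomm G b b1 = gcomm G b a1
    \<and> gcomm G (inv a \<otimes> b) b1 = \<one> \<and> gcomm G b (inv a1 \<otimes> b1) = \<one>
    \<and> gcomm G (inv a1) (inv b) = inv (gcomm G b a1) \<and> gcomm G b1 (inv a) = gcomm G b a1
    \<and> gcomm G (gcomm G b a1) (inv a \<otimes> b) = \<one> \<and> gcomm G (gcomm G b a1) (inv a1 \<otimes> b1) = \<one>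
    \<and> gcomm G b (inv a) = \<one> \<and> gcomm G (inv a1) (inv b1) = \<one>"
proof -
  define Xv where "Xv = gcomm G b a1"
  define c where "c = gcomm G a a1"
  have Xv: "Xv \<in> carrier G" and c: "c \<in> carrier G" using a b a1 b1 by (simp_all add: Xv_def c_def)
  have Xa: "gcomm G Xv a = \<one>" and Xa1: "gcomm G Xv a1 = \<one>" and ca: "gcomm G c a = \<one>" and ca1: "gcomm G c a1 = \<one>"
    using r6a r6b r6c r6d by (simp_all add: Xv_def c_def)
  have h5a: "gcomm G (inv a) (inv b1) = Xv" using r5a a b1 Xv
    by (metis Xv_def inv_closed gcomm_closed inv_equality inv_inv)
  have h5b: "gcomm G (inv b) (inv b1) = Xv" using r5b b b1 Xv
    by (metis Xv_def inv_closed gcomm_closed inv_equality inv_inv)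
  have G2: "gcomm G (inv a \<otimes> b) b1 = \<one>"
  proof -
    have e: "a \<otimes> b1 \<otimes> inv a \<otimes> inv b1 = b \<otimes> b1 \<otimes> inv b \<otimes> inv b1"
      using h5a h5b a b b1 by (simp add: gcomm_def)
    have "inv b \<otimes> (a \<otimes> b1 \<otimes> inv a \<otimes> inv b1) \<otimes> (b1 \<otimes> a) = inv b \<otimes> (b \<otimes> b1 \<otimes> inv b \<otimes> inv b1) \<otimes> (b1 \<otimes> a)"
      using e by simp
    hence "(inv b \<otimes> a) \<otimes> b1 = b1 \<otimes> (inv b \<otimes> a)" using a b b1 by (simp add: gsimp)
    hence "gcomm G (inv b \<otimes> a) b1 = \<one>" using a b b1 by (simp add: comm_iff)
    hence "gcomm G (inv (inv b \<otimes> a)) b1 = \<one>" using a b b1 comm_inv_l by simp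
    thus ?thesis using a b by (simp add: inv_mult_group)
  qed
  have ba: "gcomm G b a = \<one>" using ab a b comm_sym by blast
  have da: "gcomm G (inv a \<otimes> b) a = \<one>"
    using comm_mult_l[OF inv_closed[OF a] b a] comm_inv_l[OF a a] ba a by (simp add: comm_iff)
  have G3: "gcomm G Xv b = \<one>"
  proof -
    have dX: "gcomm G (inv a \<otimes> b) Xv = \<one>"
    proof -
      have "Xv = a \<otimes> b1 \<otimes> inv a \<otimes> inv b1" using h5a a b1 by (simp add: gcomm_def)
      moreover have "gcomm G (inv a \<otimes> b) (a \<otimes> b1 \<otimes> inv a \<otimes> inv b1) = \<one>"
        using a b b1 da G2 by (intro comm_mult_r comm_inv_r) simp_all
      ultimately show ?thesis by simp
    qed
    have "gcomm G Xv (a \<otimes> (inv a \<otimes> b)) = \<one>"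
      using comm_mult_r[OF Xv a _ Xa] comm_sym[OF _ Xv dX] a b by simp
    thus ?thesis using a b by (simp add: gsimp)
  qed
  have binva1: "gcomm G b (inv a1) = inv Xv"
    using gcomm_inv_r[OF b a1] comm_conj'[OF inv_closed[OF Xv] a1] comm_inv_l[OF Xv a1 Xa1] Xv a1
    by (simp add: Xv_def)
  have G4: "gcomm G Xv b1 = \<one>"
  proof -
    have hw: "(inv a1 \<otimes> gcomm G (gcomm G b (inv a1)) b1 \<otimes> a1) \<otimes> (inv b1 \<otimes> gcomm G (gcomm G a1 (inv b1)) b \<otimes> b1)
       \<otimes> (inv b \<otimes> gcomm G (gcomm G b1 (inv b)) a1 \<otimes> b) = \<one>"
      using hall_witt[OF b a1 b1] by simp
    have t2: "gcomm G a1 (inv b1) = \<one>" using comm_inv_r a1b1 a1 b1 by simp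
    have t3a: "gcomm G b1 (inv b) = inv b1 \<otimes> Xv \<otimes> b1"
      using h5b[symmetric] b b1 by (simp add: gcomm_def gsimp)
    have t3: "gcomm G (gcomm G b1 (inv b)) a1 = \<one>"
    proof -
      have "gcomm G (inv b1 \<otimes> Xv \<otimes> b1) a1 = gcomm G (inv b1 \<otimes> Xv \<otimes> b1) (inv b1 \<otimes> a1 \<otimes> b1)"
        using comm_conj[OF a1 b1 a1b1] by simp
      also have "\<dots> = inv b1 \<otimes> gcomm G Xv a1 \<otimes> b1" using gcomm_conj Xv a1 b1 by simp
      finally show ?thesis using t3a Xa1 b1 by simp
    qed
    have "inv a1 \<otimes> gcomm G (inv Xv) b1 \<otimes> a1 = \<one>"
      using hw t2 t3 binva1 a1 b1 b Xv c by simp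
    hence "gcomm G (inv Xv) b1 = \<one>" using a1 b1 Xv conj_eq_one[of "gcomm G (inv Xv) b1" a1] by simp
    thus ?thesis using comm_inv_l[OF inv_closed[OF Xv] b1] Xv by simp
  qed
  have G6: "gcomm G a b1 = Xv"
  proof -
    have "Xv = (a \<otimes> b1) \<otimes> gcomm G a b1 \<otimes> inv (a \<otimes> b1)" using h5a gcomm_invinv a b1 by simp
    hence "gcomm G a b1 = inv (a \<otimes> b1) \<otimes> Xv \<otimes> (a \<otimes> b1)" using a b1 by (simp add: gsimp)
    thus ?thesis using comm_conj[OF Xv m_closed[OF a b1]] comm_mult_r[OF Xv a b1 Xa G4] a b1 by simp
  qed
  have G5: "gcomm G b b1 = Xv"
  proof -
    have "Xv = (b \<otimes> b1) \<otimes> gcomm G b b1 \<otimes> inv (b \<otimes> b1)" using h5b gcomm_invinv b b1 by simp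
    hence "gcomm G b b1 = inv (b \<otimes> b1) \<otimes> Xv \<otimes> (b \<otimes> b1)" using b b1 by (simp add: gsimp)
    thus ?thesis using comm_conj[OF Xv m_closed[OF b b1]] comm_mult_r[OF Xv b b1 G3 G4] b b1 by simp
  qed
  have cinv: "gcomm G a1 (inv a) = c"
    using gcomm_inv_r[OF a1 a] gcomm_inv_swap[OF a1 a] comm_conj'[OF c a ca] by (simp add: c_def)
  have G1: "gcomm G c b = \<one>"
  proof -
    have hw: "(inv a1 \<otimes> gcomm G (gcomm G b (inv a1)) a \<otimes> a1) \<otimes> (inv a \<otimes> gcomm G (gcomm G a1 (inv a)) b \<otimes> a)
       \<otimes> (inv b \<otimes> gcomm G (gcomm G a (inv b)) a1 \<otimes> b) = \<one>"
      using hall_witt[OF b a1 a] by simp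
    have t1: "gcomm G (inv Xv) a = \<one>" using comm_inv_l[OF Xv a Xa] by simp
    have t3: "gcomm G a (inv b) = \<one>" using comm_inv_r[OF a b ab] .
    have "inv a \<otimes> gcomm G c b \<otimes> a = \<one>" using hw t1 t3 binva1 cinv a1 a b c Xv by simp
    thus ?thesis using a b c conj_eq_one[of "gcomm G c b" a] by simp
  qed
  have E2: "gcomm G b1 (inv a) = Xv"
    using gcomm_inv_r[OF b1 a] gcomm_inv_swap[OF b1 a] G6 comm_conj'[OF Xv a Xa] by simp
  have F2: "gcomm G c b1 = \<one>"
  proof -
    have hw: "(inv a1 \<otimes> gcomm G (gcomm G a (inv a1)) b1 \<otimes> a1) \<otimes> (inv b1 \<otimes> gcomm G (gcomm G a1 (inv b1)) a \<otimes> b1)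
       \<otimes> (inv a \<otimes> gcomm G (gcomm G b1 (inv a)) a1 \<otimes> a) = \<one>"
      using hall_witt[OF a a1 b1] by simp
    have t2: "gcomm G a1 (inv b1) = \<one>" using comm_inv_r a1b1 a1 b1 by simp
    have ainv: "gcomm G a (inv a1) = inv c"
      using gcomm_inv_r[OF a a1] comm_conj'[OF inv_closed[OF c] a1] comm_inv_l[OF c a1 ca1] c a1
      by (simp add: c_def)
    have "inv a1 \<otimes> gcomm G (inv c) b1 \<otimes> a1 = \<one>" using hw t2 E2 Xa1 ainv a1 a b1 c Xv by simp
    hence "gcomm G (inv c) b1 = \<one>" using a1 b1 c conj_eq_one[of "gcomm G (inv c) b1" a1] by simp
    thus ?thesis using comm_inv_l[OF inv_closed[OF c] b1] c by simp
  qed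
  have G7: "gcomm G b (inv a1 \<otimes> b1) = \<one>"
  proof -
    have "gcomm G b (inv a1 \<otimes> b1) = gcomm G b b1 \<otimes> (inv b1 \<otimes> gcomm G b (inv a1) \<otimes> b1)"
      using gcomm_mult_r b a1 b1 by simp
    also have "\<dots> = Xv \<otimes> inv Xv" using G5 binva1 comm_conj[OF inv_closed[OF Xv] b1] comm_inv_l[OF Xv b1 G4] by simp
    finally show ?thesis using Xv by simp
  qed
  have E1: "gcomm G (inv a1) (inv b) = inv Xv"
  proof -
    have "gcomm G a1 b = inv Xv" using gcomm_inv_swap[OF b a1] by (simp add: Xv_def)
    hence "gcomm G (inv a1) (inv b) = (a1 \<otimes> b) \<otimes> inv Xv \<otimes> inv (a1 \<otimes> b)" using gcomm_invinv a1 b by simp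
    thus ?thesis using comm_conj'[OF inv_closed[OF Xv] m_closed[OF a1 b]]
      comm_inv_l[OF Xv _ comm_mult_r[OF Xv a1 b Xa1 G3]] a1 b by simp
  qed
  have E3: "gcomm G Xv (inv a \<otimes> b) = \<one>"
    using comm_mult_r[OF Xv inv_closed[OF a] b comm_inv_r[OF Xv a Xa] G3] a b by simp
  have E4: "gcomm G Xv (inv a1 \<otimes> b1) = \<one>"
    using comm_mult_r[OF Xv inv_closed[OF a1] b1 comm_inv_r[OF Xv a1 Xa1] G4] a1 b1 by simp
  have E5: "gcomm G b (inv a) = \<one>" using comm_inv_r[OF b a ba] .
  have E6: "gcomm G (inv a1) (inv b1) = \<one>" using comm_inv_l[OF a1 _ comm_inv_r[OF a1 b1 a1b1]] a1 b1 by simp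
  show ?thesis using G1 F2 G3 G4 G6 G5 G2 G7 E1 E2 E3 E4 E5 E6 by (simp add: Xv_def c_def)
qed

end

context group begin

lemma conj_by_comm: "x \<in> carrier G \<Longrightarrow> g \<in> carrier G \<Longrightarrow> g \<otimes> x \<otimes> inv g = x \<otimes> gcomm G x (inv g)"
  by (simp add: gcomm_def gsimp)

lemma gcomm_conj_rule:
  assumes "x \<in> carrier G" "y \<in> carrier G" "g \<in> carrier G"
  shows "gcomm G (g \<otimes> x \<otimes> inv g) y = g \<otimes> gcomm G x (inv g \<otimes> y \<otimes> g) \<otimes> inv g"
  using assms by (simp add: gcomm_def gsimp)

lemma QB2:
  assumes a: "a \<in> carrier G" and b: "b \<in> carrier G" and a1: "a1 \<in> carrier G" and b1: "b1 \<in> carrier G"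
    and a2: "a2 \<in> carrier G"
    and ca: "gcomm G (gcomm G a a1) a = \<one>" and ca1: "gcomm G (gcomm G a a1) a1 = \<one>"
    and Xa1: "gcomm G (gcomm G b a1) a1 = \<one>" and Xb: "gcomm G (gcomm G b a1) b = \<one>"
    and cb1: "gcomm G (gcomm G a a1) b1 = \<one>"
    and c1a1: "gcomm G (gcomm G a1 a2) a1 = \<one>" and c1a2: "gcomm G (gcomm G a1 a2) a2 = \<one>"
    and c1b1: "gcomm G (gcomm G a1 a2) b1 = \<one>"
    and cba1: "gcomm G (gcomm G b1 a2) a1 = \<one>" and cba2: "gcomm G (gcomm G b1 a2) a2 = \<one>"
    and cbb1: "gcomm G (gcomm G b1 a2) b1 = \<one>"
    and aa2: "gcomm G a a2 = \<one>" and ba2: "gcomm G b a2 = \<one>"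
    and cc1: "gcomm G (gcomm G a a1) (gcomm G a1 a2) = \<one>"
    and ccb: "gcomm G (gcomm G a a1) (gcomm G b1 a2) = \<one>"
    and Xc1: "gcomm G (gcomm G b a1) (gcomm G a1 a2) = \<one>"
    and Xcb: "gcomm G (gcomm G b a1) (gcomm G b1 a2) = \<one>"
    and G6: "gcomm G a b1 = gcomm G b a1"
    and XXa: "gcomm G (gcomm G b a1) a = \<one>"
  shows "gcomm G (gcomm G (gcomm G a a1) a2) a1 = \<one> \<and> gcomm G (gcomm G (gcomm G a a1) a2) b1 = \<one>
    \<and> gcomm G (gcomm G (gcomm G b a1) a2) a1 = \<one>
    \<and> gcomm G (inv a2) (inv a1) = inv (gcomm G a1 a2) \<and> gcomm G (inv a2) (inv b1) = inv (gcomm G b1 a2)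
    \<and> gcomm G a1 (inv (gcomm G a a1)) = \<one> \<and> gcomm G b1 (inv (gcomm G a a1)) = \<one>
    \<and> gcomm G a1 (inv (gcomm G b a1)) = \<one>
    \<and> gcomm G (inv a1) (inv (gcomm G a1 a2)) = \<one> \<and> gcomm G (inv a1) (inv (gcomm G b1 a2)) = \<one>
    \<and> gcomm G (gcomm G a1 a2) (inv a) = gcomm G (gcomm G a a1) a2
    \<and> gcomm G (gcomm G b1 a2) (inv a) = gcomm G (gcomm G b a1) a2
    \<and> gcomm G (gcomm G a1 a2) (inv b) = gcomm G (gcomm G b a1) a2"
proof -
  define c where "c = gcomm G a a1"
  define Xv where "Xv = gcomm G b a1"
  define c1 where "c1 = gcomm G a1 a2"
  define cb where "cb = gcomm G b1 a2"
  define D where "D = gcomm G c a2"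
  define DX where "DX = gcomm G Xv a2"
  have c: "c \<in> carrier G" and Xv: "Xv \<in> carrier G" and c1: "c1 \<in> carrier G" and cbc: "cb \<in> carrier G"
    and D: "D \<in> carrier G" and DX: "DX \<in> carrier G"
    using a b a1 b1 a2 by (simp_all add: c_def Xv_def c1_def cb_def D_def DX_def)
  note defs = c_def[symmetric] Xv_def[symmetric] c1_def[symmetric] cb_def[symmetric] D_def[symmetric] DX_def[symmetric]
  note hyps = ca ca1 Xa1 Xb cb1 c1a1 c1a2 c1b1 cba1 cba2 cbb1 cc1 ccb Xc1 Xcb G6
  note h = hyps[unfolded defs]
  have K4: "gcomm G (inv a2) (inv a1) = inv c1"
  proof -
    have "gcomm G (inv a2) (inv a1) = (a2 \<otimes> a1) \<otimes> inv c1 \<otimes> inv (a2 \<otimes> a1)"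
      using gcomm_invinv[OF a2 a1] gcomm_inv_swap[OF a1 a2] by (simp add: c1_def)
    also have "\<dots> = inv c1"
      using comm_conj'[OF inv_closed[OF c1] m_closed[OF a2 a1]]
        comm_inv_l[OF c1 _ comm_mult_r[OF c1 a2 a1 h(7) h(6)]] a1 a2 c1 by simp
    finally show ?thesis .
  qed
  have K8: "gcomm G (inv a2) (inv b1) = inv cb"
  proof -
    have "gcomm G (inv a2) (inv b1) = (a2 \<otimes> b1) \<otimes> inv cb \<otimes> inv (a2 \<otimes> b1)"
      using gcomm_invinv[OF a2 b1] gcomm_inv_swap[OF b1 a2] by (simp add: cb_def)
    also have "\<dots> = inv cb"
      using comm_conj'[OF inv_closed[OF cbc] m_closed[OF a2 b1]]
        comm_inv_l[OF cbc _ comm_mult_r[OF cbc a2 b1 h(10) h(11)]] b1 a2 cbc by simp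
    finally show ?thesis .
  qed
  have K5: "gcomm G a1 (inv c) = \<one>" using comm_inv_r[OF a1 c comm_sym[OF c a1 h(2)]] .
  have K9: "gcomm G b1 (inv c) = \<one>" using comm_inv_r[OF b1 c comm_sym[OF c b1 h(5)]] .
  have K12: "gcomm G a1 (inv Xv) = \<one>" using comm_inv_r[OF a1 Xv comm_sym[OF Xv a1 h(3)]] .
  have K6: "gcomm G (inv a1) (inv c1) = \<one>"
    using comm_inv_l[OF a1 _ comm_inv_r[OF a1 c1 comm_sym[OF c1 a1 h(6)]]] c1 by simp
  have K10: "gcomm G (inv a1) (inv cb) = \<one>"
    using comm_inv_l[OF a1 _ comm_inv_r[OF a1 cbc comm_sym[OF cbc a1 h(9)]]] cbc by simp
  have cinv: "gcomm G a1 (inv a) = c"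
    using gcomm_inv_r[OF a1 a] gcomm_inv_swap[OF a1 a] comm_conj'[OF c a h(1)] by (simp add: c_def)
  have Xinv: "gcomm G a1 (inv b) = Xv"
    using gcomm_inv_r[OF a1 b] gcomm_inv_swap[OF a1 b] comm_conj'[OF Xv b h(4)] by (simp add: Xv_def)
  have E2: "gcomm G b1 (inv a) = Xv"
  proof -
    have "gcomm G b1 (inv a) = a \<otimes> inv (gcomm G b1 a) \<otimes> inv a" using gcomm_inv_r[OF b1 a] .
    also have "\<dots> = a \<otimes> Xv \<otimes> inv a" using gcomm_inv_swap[OF b1 a] gcomm_inv_swap[OF a b1] h(16) a b1 by simp
    also have "\<dots> = Xv"
    proof -
      have Xa: "gcomm G Xv a = \<one>"
        using XXa by (simp add: Xv_def)
      show ?thesis using comm_conj'[OF Xv a Xa] .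
    qed
    finally show ?thesis .
  qed
  have aa2': "gcomm G a2 a = \<one>" using comm_sym[OF a a2 aa2] .
  have ba2': "gcomm G a2 b = \<one>" using comm_sym[OF b a2 ba2] .
  have conj_a1: "a \<otimes> a1 \<otimes> inv a = a1 \<otimes> c" using conj_by_comm[OF a1 a] cinv by simp
  have conj_a1b: "b \<otimes> a1 \<otimes> inv b = a1 \<otimes> Xv" using conj_by_comm[OF a1 b] Xinv by simp
  have conj_b1: "a \<otimes> b1 \<otimes> inv a = b1 \<otimes> Xv" using conj_by_comm[OF b1 a] E2 by simp
  have conj_a2: "a \<otimes> a2 \<otimes> inv a = a2" using comm_conj'[OF a2 a aa2'] .
  have conj_a2b: "b \<otimes> a2 \<otimes> inv b = a2" using comm_conj'[OF a2 b ba2'] .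
  have K7: "gcomm G c1 (inv a) = D"
  proof -
    have "gcomm G c1 (inv a) = inv c1 \<otimes> (a \<otimes> c1 \<otimes> inv a)" using a c1 by (simp add: gcomm_def gsimp)
    also have "a \<otimes> c1 \<otimes> inv a = gcomm G (a1 \<otimes> c) a2"
      using gcomm_conj'[OF a1 a2 a] conj_a1 conj_a2 by (simp add: c1_def)
    also have "\<dots> = (inv c \<otimes> c1 \<otimes> c) \<otimes> D" using gcomm_mult_l[OF a1 c a2] by (simp add: c1_def D_def)
    also have "inv c \<otimes> c1 \<otimes> c = c1" using comm_conj[OF c1 c comm_sym[OF c c1 h(12)]] .
    finally show ?thesis using c1 D by (simp add: gsimp)
  qed
  have K13: "gcomm G c1 (inv b) = DX"
  proof -
    have "gcomm G c1 (inv b) = inv c1 \<otimes> (b \<otimes> c1 \<otimes> inv b)" using b c1 by (simp add: gcomm_def gsimp)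
    also have "b \<otimes> c1 \<otimes> inv b = gcomm G (a1 \<otimes> Xv) a2"
      using gcomm_conj'[OF a1 a2 b] conj_a1b conj_a2b by (simp add: c1_def)
    also have "\<dots> = (inv Xv \<otimes> c1 \<otimes> Xv) \<otimes> DX" using gcomm_mult_l[OF a1 Xv a2] by (simp add: c1_def DX_def)
    also have "inv Xv \<otimes> c1 \<otimes> Xv = c1" using comm_conj[OF c1 Xv comm_sym[OF Xv c1 h(14)]] .
    finally show ?thesis using c1 DX by (simp add: gsimp)
  qed
  have K11: "gcomm G cb (inv a) = DX"
  proof -
    have "gcomm G cb (inv a) = inv cb \<otimes> (a \<otimes> cb \<otimes> inv a)" using a cbc by (simp add: gcomm_def gsimp)
    also have "a \<otimes> cb \<otimes> inv a = gcomm G (b1 \<otimes> Xv) a2"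
      using gcomm_conj'[OF b1 a2 a] conj_b1 conj_a2 by (simp add: cb_def)
    also have "\<dots> = (inv Xv \<otimes> cb \<otimes> Xv) \<otimes> DX" using gcomm_mult_l[OF b1 Xv a2] by (simp add: cb_def DX_def)
    also have "inv Xv \<otimes> cb \<otimes> Xv = cb" using comm_conj[OF cbc Xv comm_sym[OF Xv cbc h(15)]] .
    finally show ?thesis using cbc DX by (simp add: gsimp)
  qed
  have K1: "gcomm G D a1 = \<one>"
  proof -
    have De: "D = inv c1 \<otimes> (a \<otimes> c1 \<otimes> inv a)" using K7 a c1 by (simp add: gcomm_def gsimp)
    have "gcomm G (a \<otimes> c1 \<otimes> inv a) a1 = a \<otimes> gcomm G c1 (inv a \<otimes> a1 \<otimes> a) \<otimes> inv a"
      using gcomm_conj_rule[OF c1 a1 a] .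
    also have "inv a \<otimes> a1 \<otimes> a = a1 \<otimes> inv c"
      using conj_comm[OF a1 a] gcomm_inv_swap[OF a a1] by (simp add: c_def)
    also have "gcomm G c1 (a1 \<otimes> inv c) = \<one>"
      using comm_mult_r[OF c1 a1 inv_closed[OF c] h(6) comm_inv_r[OF c1 c comm_sym[OF c c1 h(12)]]] .
    finally have "gcomm G (a \<otimes> c1 \<otimes> inv a) a1 = \<one>" using a by simp
    thus ?thesis using De comm_mult_l[OF inv_closed[OF c1] _ a1 comm_inv_l[OF c1 a1 h(6)]] a c1 by simp
  qed
  have K2: "gcomm G D b1 = \<one>"
  proof -
    have De: "D = inv c1 \<otimes> (a \<otimes> c1 \<otimes> inv a)" using K7 a c1 by (simp add: gcomm_def gsimp)
    have "gcomm G (a \<otimes> c1 \<otimes> inv a) b1 = a \<otimes> gcomm G c1 (inv a \<otimes> b1 \<otimes> a) \<otimes> inv a"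
      using gcomm_conj_rule[OF c1 b1 a] .
    also have "inv a \<otimes> b1 \<otimes> a = b1 \<otimes> inv Xv"
      using conj_comm[OF b1 a] gcomm_inv_swap[OF a b1] h(16) by (simp add: Xv_def)
    also have "gcomm G c1 (b1 \<otimes> inv Xv) = \<one>"
      using comm_mult_r[OF c1 b1 inv_closed[OF Xv] h(8) comm_inv_r[OF c1 Xv comm_sym[OF Xv c1 h(14)]]] .
    finally have "gcomm G (a \<otimes> c1 \<otimes> inv a) b1 = \<one>" using a by simp
    thus ?thesis using De comm_mult_l[OF inv_closed[OF c1] _ b1 comm_inv_l[OF c1 b1 h(8)]] a c1 by simp
  qed
  have K3: "gcomm G DX a1 = \<one>"
  proof -
    have De: "DX = inv c1 \<otimes> (b \<otimes> c1 \<otimes> inv b)" using K13 b c1 by (simp add: gcomm_def gsimp)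
    have "gcomm G (b \<otimes> c1 \<otimes> inv b) a1 = b \<otimes> gcomm G c1 (inv b \<otimes> a1 \<otimes> b) \<otimes> inv b"
      using gcomm_conj_rule[OF c1 a1 b] .
    also have "inv b \<otimes> a1 \<otimes> b = a1 \<otimes> inv Xv"
      using conj_comm[OF a1 b] gcomm_inv_swap[OF b a1] by (simp add: Xv_def)
    also have "gcomm G c1 (a1 \<otimes> inv Xv) = \<one>"
      using comm_mult_r[OF c1 a1 inv_closed[OF Xv] h(6) comm_inv_r[OF c1 Xv comm_sym[OF Xv c1 h(14)]]] .
    finally have "gcomm G (b \<otimes> c1 \<otimes> inv b) a1 = \<one>" using b by simp
    thus ?thesis using De comm_mult_l[OF inv_closed[OF c1] _ a1 comm_inv_l[OF c1 a1 h(6)]] b c1 by simp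
  qed
  show ?thesis using K1 K2 K3 K4 K8 K5 K9 K12 K6 K10 K7 K11 K13
    by (simp add: c_def Xv_def c1_def cb_def D_def DX_def)
qed

end

context group begin

lemma cent_pow_eq_one: "cent P \<Longrightarrow> cent Q \<Longrightarrow> P [^] (m::nat) = Q [^] m \<Longrightarrow> (P \<otimes> inv Q) [^] m = \<one>"
  using pow_mult_cent[OF cent_inv[of Q] centD[of P]] pow_inv[OF centD[of Q]] centD[of Q]
  by (simp add: nat_pow_closed)

lemma cent_pow_eq_one': "cent P \<Longrightarrow> cent Q \<Longrightarrow> P [^] (m::nat) = Q [^] m \<Longrightarrow> (inv P \<otimes> Q) [^] m = \<one>"
  using pow_mult_cent'[OF cent_inv[of P] centD[of Q]] pow_inv[OF centD[of P]] centD[of P] centD[of Q]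
  by (simp add: nat_pow_closed)

lemma pow_ab_cent:
  assumes a: "a \<in> carrier G" and b: "b \<in> carrier G" and r: "cent (a [^] (m1::nat) \<otimes> inv (b [^] m1))"
    and p: "cent (b [^] (m2::nat))" and d: "m1 dvd m2"
  shows "cent (a [^] m2)"
proof -
  obtain k where k: "m2 = m1 * k" using d by blast
  have "a [^] m1 = (a [^] m1 \<otimes> inv (b [^] m1)) \<otimes> b [^] m1" using a b by (simp add: gsimp)
  hence "a [^] m2 = (a [^] m1 \<otimes> inv (b [^] m1)) [^] k \<otimes> (b [^] m1) [^] k"
    using k pow_mult_cent'[OF r, of "b [^] m1" k] a b by (simp add: nat_pow_pow)
  also have "(b [^] m1) [^] k = b [^] m2" using k b by (simp add: nat_pow_pow)
  finally show ?thesis using cent_mult[OF cent_pow[OF r] p] by simp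
qed

lemma delta_pow_cent:
  assumes x: "x \<in> carrier G" and y: "y \<in> carrier G" and c: "cent (gcomm G x y)"
    and r: "cent (x [^] (m::nat) \<otimes> inv (y [^] m))"
  shows "cent ((inv x \<otimes> y) [^] m)" and "cent ((y \<otimes> inv x) [^] m)"
proof -
  have c1: "cent (gcomm G (inv x) y)" using gcomm_inv_l_c[OF c x y] cent_inv[OF c] by simp
  have c2: "cent (gcomm G y (inv x))" using gcomm_inv_swap[of "inv x" y] cent_inv[OF c1] x y by simp
  have c3: "cent (gcomm G (inv x) y)" using c1 .
  have e: "inv (x [^] m) \<otimes> y [^] m = inv (x [^] m) \<otimes> inv (x [^] m \<otimes> inv (y [^] m)) \<otimes> x [^] m"
    using x y by (simp add: gsimp)
  have ce: "cent (inv (x [^] m) \<otimes> y [^] m)"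
    using e conj_cent[OF cent_inv[OF r], of "x [^] m"] x cent_inv[OF r] by simp
  have "(inv x \<otimes> y) [^] m = (inv (x [^] m) \<otimes> y [^] m) \<otimes> gcomm G y (inv x) [^] (m choose 2)"
    using prodpow[OF inv_closed[OF x] y c1] x y by (simp add: pow_inv)
  thus "cent ((inv x \<otimes> y) [^] m)" using cent_mult[OF ce cent_pow[OF c2]] by simp
  have c4: "cent (gcomm G y (inv x))" using c2 .
  have "(y \<otimes> inv x) [^] m = inv (x [^] m \<otimes> inv (y [^] m)) \<otimes> gcomm G (inv x) y [^] (m choose 2)"
    using prodpow[OF y inv_closed[OF x] c4] x y by (simp add: pow_inv inv_mult_group)
  thus "cent ((y \<otimes> inv x) [^] m)" using cent_mult[OF cent_inv[OF r] cent_pow[OF c1]] by simp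
qed

lemma gcomm_mult_r_cc: "cent (gcomm G x y) \<Longrightarrow> cent (gcomm G x z) \<Longrightarrow> x \<in> carrier G \<Longrightarrow> y \<in> carrier G \<Longrightarrow> z \<in> carrier G \<Longrightarrow>
  gcomm G x (y \<otimes> z) = gcomm G x y \<otimes> gcomm G x z"
  using gcomm_mult_r_c cent_comm centD by metis

lemma claim1:
  assumes a: "a \<in> carrier G" and b: "b \<in> carrier G" and c: "cent (gcomm G a b)"
    and r: "cent (a [^] (m::nat) \<otimes> inv (b [^] m))"
  shows "gcomm G a b [^] m = \<one>"
proof -
  have "gcomm G a b [^] m = gcomm G (a [^] m) b" using gcomm_pow_l[OF c a b] by simp
  also have "a [^] m = (a [^] m \<otimes> inv (b [^] m)) \<otimes> b [^] m" using a b by (simp add: gsimp)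
  also have "gcomm G \<dots> b = gcomm G (b [^] m) b" using gcomm_centmul_l[OF r _ b] b by simp
  also have "\<dots> = \<one>" using b by (simp add: gcomm_one_iff nat_pow_mult[symmetric] nat_pow_Suc2[symmetric])
  finally show ?thesis .
qed

lemma eqpow_l:
  assumes x: "x \<in> carrier G" and x': "x' \<in> carrier G" and y: "y \<in> carrier G"
    and c: "cent (gcomm G x y)" and c': "cent (gcomm G x' y)" and r: "cent (x [^] (m::nat) \<otimes> inv (x' [^] m))"
  shows "gcomm G x y [^] m = gcomm G x' y [^] m"
proof -
  have "gcomm G x y [^] m = gcomm G (x [^] m) y" using gcomm_pow_l[OF c x y] by simp
  also have "x [^] m = (x [^] m \<otimes> inv (x' [^] m)) \<otimes> x' [^] m" using x x' by (simp add: gsimp)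
  also have "gcomm G \<dots> y = gcomm G (x' [^] m) y" using gcomm_centmul_l[OF r _ y] x' by simp
  also have "\<dots> = gcomm G x' y [^] m" using gcomm_pow_l[OF c' x' y] by simp
  finally show ?thesis .
qed

lemma eqpow_r:
  assumes x: "x \<in> carrier G" and y: "y \<in> carrier G" and y': "y' \<in> carrier G"
    and c: "cent (gcomm G x y)" and c': "cent (gcomm G x y')" and r: "cent (y [^] (m::nat) \<otimes> inv (y' [^] m))"
  shows "gcomm G x y [^] m = gcomm G x y' [^] m"
proof -
  have "gcomm G x y [^] m = gcomm G x (y [^] m)" using gcomm_pow_r[OF c x y] by simp
  also have "y [^] m = (y [^] m \<otimes> inv (y' [^] m)) \<otimes> y' [^] m" using y y' by (simp add: gsimp)
  also have "gcomm G x \<dots> = gcomm G x (y' [^] m)" using gcomm_centmul_r[OF r _ x] y' by simp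
  also have "\<dots> = gcomm G x y' [^] m" using gcomm_pow_r[OF c' x y'] by simp
  finally show ?thesis .
qed

lemma claim2:
  assumes a: "a \<in> carrier G" and b: "b \<in> carrier G" and c: "c \<in> carrier G" and d: "d \<in> carrier G"
    and ac: "cent (gcomm G a c)" and ad: "cent (gcomm G a d)" and bc: "cent (gcomm G b c)" and bd: "cent (gcomm G b d)"
    and ra: "cent (a [^] (m1::nat) \<otimes> inv (b [^] m1))" and rc: "cent (c [^] m1 \<otimes> inv (d [^] m1))"
    and pb: "cent (b [^] (m2::nat))" and dv: "m1 dvd m2"
  shows "gcomm G a c [^] m2 = \<one> \<and> (gcomm G b d \<otimes> inv (gcomm G a c)) [^] m1 = \<one>
    \<and> (gcomm G b c \<otimes> inv (gcomm G b d)) [^] m1 = \<one> \<and> (gcomm G a d \<otimes> inv (gcomm G b d)) [^] m1 = \<one>"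
proof -
  have am: "cent (a [^] m2)" using pow_ab_cent[OF a b ra pb dv] .
  have 1: "gcomm G a c [^] m2 = \<one>" using gcomm_pow_l[OF ac a c, of m2] gcomm_cent_l[OF am c] by simp
  have e1: "gcomm G a c [^] m1 = gcomm G a d [^] m1" using eqpow_r[OF a c d ac ad rc] .
  have e2: "gcomm G b c [^] m1 = gcomm G b d [^] m1" using eqpow_r[OF b c d bc bd rc] .
  have e3: "gcomm G a d [^] m1 = gcomm G b d [^] m1" using eqpow_l[OF a b d ad bd ra] .
  show ?thesis using 1 cent_pow_eq_one[OF bd ac] cent_pow_eq_one[OF bc bd] cent_pow_eq_one[OF ad bd] e1 e2 e3
    by simp
qed

end

context group begin

lemma eq_from_inv: "x \<in> carrier G \<Longrightarrow> y \<in> carrier G \<Longrightarrow> x \<otimes> inv y = \<one> \<Longrightarrow> x = y"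
  by (metis inv_equality inv_inv inv_closed r_inv l_cancel m_closed)

lemma claim34:
  assumes a: "a \<in> carrier G" and b: "b \<in> carrier G" and a1: "a1 \<in> carrier G" and b1: "b1 \<in> carrier G"
    and ra: "cent (a [^] (m1::nat) \<otimes> inv (b [^] m1))" and ra1: "cent (a1 [^] m1 \<otimes> inv (b1 [^] m1))"
    and pb: "cent (b [^] (m2::nat))" and pb1: "cent (b1 [^] m2)"
    and cab: "cent (gcomm G a b)" and ca1b1: "cent (gcomm G a1 b1)"
    and r5a: "cent (gcomm G (inv a) (inv b1) \<otimes> inv (gcomm G b a1))"
    and r5b: "cent (gcomm G (inv b) (inv b1) \<otimes> inv (gcomm G b a1))"
    and r6a: "cent (gcomm G (gcomm G a a1) a)" and r6b: "cent (gcomm G (gcomm G b a1) a)"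
    and r6c: "cent (gcomm G (gcomm G a a1) a1)" and r6d: "cent (gcomm G (gcomm G b a1) a1)"
    and dv: "m1 dvd m2"
  shows "(gcomm G a b1 \<otimes> inv (gcomm G b a1)) [^] m1 = \<one>
    \<and> (gcomm G b b1 \<otimes> inv (gcomm G b a1)) [^] m1 = \<one>
    \<and> gcomm3 G a a1 a [^] m2 = \<one>
    \<and> gcomm3 G a a1 (a1 \<otimes> inv a) [^] gcd m2 (m2 choose 2) = \<one>
    \<and> gcomm3 G a a1 (b \<otimes> inv a) [^] m1 = \<one>
    \<and> gcomm3 G a a1 (b \<otimes> inv b1 \<otimes> inv (a \<otimes> inv a1)) [^] gcd m1 (m1 choose 2) = \<one>"
proof -
  interpret P: group_hom G bar pi by (rule pi_hom)
  have gb: "group bar" by (rule group_bar)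
  note push = pi_gcomm P.hom_mult P.hom_inv
  have pc: "cent x \<longleftrightarrow> pi x = \<one>\<^bsub>bar\<^esub>" if "x \<in> carrier G" for x using pi_one_iff[OF that] by simp
  have pe: "cent (x \<otimes> inv y) \<longleftrightarrow> pi x = pi y" if "x \<in> carrier G" "y \<in> carrier G" for x y
    using pi_eq_iff[OF that] by simp
  have Q: "gcomm bar (gcomm bar (pi a) (pi a1)) (pi b) = \<one>\<^bsub>bar\<^esub> \<and> gcomm bar (gcomm bar (pi a) (pi a1)) (pi b1) = \<one>\<^bsub>bar\<^esub>
    \<and> gcomm bar (gcomm bar (pi b) (pi a1)) (pi b) = \<one>\<^bsub>bar\<^esub> \<and> gcomm bar (gcomm bar (pi b) (pi a1)) (pi b1) = \<one>\<^bsub>bar\<^esub>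
    \<and> gcomm bar (pi a) (pi b1) = gcomm bar (pi b) (pi a1) \<and> gcomm bar (pi b) (pi b1) = gcomm bar (pi b) (pi a1)
    \<and> gcomm bar (inv\<^bsub>bar\<^esub> (pi a) \<otimes>\<^bsub>bar\<^esub> pi b) (pi b1) = \<one>\<^bsub>bar\<^esub>
    \<and> gcomm bar (pi b) (inv\<^bsub>bar\<^esub> (pi a1) \<otimes>\<^bsub>bar\<^esub> pi b1) = \<one>\<^bsub>bar\<^esub>
    \<and> gcomm bar (inv\<^bsub>bar\<^esub> (pi a1)) (inv\<^bsub>bar\<^esub> (pi b)) = inv\<^bsub>bar\<^esub> (gcomm bar (pi b) (pi a1))
    \<and> gcomm bar (pi b1) (inv\<^bsub>bar\<^esub> (pi a)) = gcomm bar (pi b) (pi a1)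
    \<and> gcomm bar (gcomm bar (pi b) (pi a1)) (inv\<^bsub>bar\<^esub> (pi a) \<otimes>\<^bsub>bar\<^esub> pi b) = \<one>\<^bsub>bar\<^esub>
    \<and> gcomm bar (gcomm bar (pi b) (pi a1)) (inv\<^bsub>bar\<^esub> (pi a1) \<otimes>\<^bsub>bar\<^esub> pi b1) = \<one>\<^bsub>bar\<^esub>
    \<and> gcomm bar (pi b) (inv\<^bsub>bar\<^esub> (pi a)) = \<one>\<^bsub>bar\<^esub> \<and> gcomm bar (inv\<^bsub>bar\<^esub> (pi a1)) (inv\<^bsub>bar\<^esub> (pi b1)) = \<one>\<^bsub>bar\<^esub>"
    apply (rule group.QB1[OF gb])
    using a b a1 b1 cab ca1b1 r5a r5b r6a r6b r6c r6d by (simp_all add: pc push del: one_FactGroup mult_FactGroup)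
  have G1: "cent (gcomm G (gcomm G a a1) b)" and F2: "cent (gcomm G (gcomm G a a1) b1)"
    and G3: "cent (gcomm G (gcomm G b a1) b)" and G4: "cent (gcomm G (gcomm G b a1) b1)"
    and G6: "cent (gcomm G a b1 \<otimes> inv (gcomm G b a1))" and G5: "cent (gcomm G b b1 \<otimes> inv (gcomm G b a1))"
    and G2: "cent (gcomm G (inv a \<otimes> b) b1)" and G7: "cent (gcomm G b (inv a1 \<otimes> b1))"
    and E1: "cent (gcomm G (inv a1) (inv b) \<otimes> inv (inv (gcomm G b a1)))"
    and E2: "cent (gcomm G b1 (inv a) \<otimes> inv (gcomm G b a1))"
    and E3: "cent (gcomm G (gcomm G b a1) (inv a \<otimes> b))" and E4: "cent (gcomm G (gcomm G b a1) (inv a1 \<otimes> b1))"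
    and E5: "cent (gcomm G b (inv a))" and E6: "cent (gcomm G (inv a1) (inv b1))"
    using Q a b a1 b1 by (simp_all add: pc pe push group.r_inv[OF gb] group.l_inv[OF gb] del: one_FactGroup mult_FactGroup)

  define cc where "cc = gcomm G a a1"
  define Xv where "Xv = gcomm G b a1"
  define Z2 where "Z2 = gcomm G a b1"
  define Yv where "Yv = gcomm G b b1"
  define dl where "dl = inv a \<otimes> b"
  define dl1 where "dl1 = inv a1 \<otimes> b1"
  have cc: "cc \<in> carrier G" and Xv: "Xv \<in> carrier G" and Z2: "Z2 \<in> carrier G" and Yv: "Yv \<in> carrier G"
    and dl: "dl \<in> carrier G" and dl1: "dl1 \<in> carrier G"
    using a b a1 b1 by (simp_all add: cc_def Xv_def Z2_def Yv_def dl_def dl1_def)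
  note defs = cc_def[symmetric] Xv_def[symmetric] Z2_def[symmetric] Yv_def[symmetric] dl_def[symmetric] dl1_def[symmetric]
  note G1 = G1[unfolded defs] and F2 = F2[unfolded defs] and G3 = G3[unfolded defs] and G4 = G4[unfolded defs]
    and G6 = G6[unfolded defs] and G5 = G5[unfolded defs] and G2 = G2[unfolded defs] and G7 = G7[unfolded defs]
    and E1 = E1[unfolded defs] and E2 = E2[unfolded defs] and E3 = E3[unfolded defs] and E4 = E4[unfolded defs]
  note r6a = r6a[unfolded defs] and r6b = r6b[unfolded defs] and r6c = r6c[unfolded defs] and r6d = r6d[unfolded defs]
  have dm: "cent (dl [^] m1)" using delta_pow_cent(1)[OF a b cab ra] by (simp add: dl_def)
  have dm1: "cent (dl1 [^] m1)" using delta_pow_cent(1)[OF a1 b1 ca1b1 ra1] by (simp add: dl1_def)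
  have e2e: "Yv \<otimes> inv Xv = gcomm G b dl1 \<otimes> gcomm G Xv dl1"
  proof -
    have "Yv = gcomm G b (a1 \<otimes> dl1)" using a1 b1 by (simp add: Yv_def dl1_def gsimp)
    also have "\<dots> = gcomm G b dl1 \<otimes> (inv dl1 \<otimes> Xv \<otimes> dl1)" using gcomm_mult_r[OF b a1 dl1] by (simp add: Xv_def)
    also have "\<dots> = gcomm G b dl1 \<otimes> (Xv \<otimes> gcomm G Xv dl1)" using conj_comm[OF Xv dl1] by simp
    finally have "Yv \<otimes> inv Xv = gcomm G b dl1 \<otimes> (Xv \<otimes> gcomm G Xv dl1 \<otimes> inv Xv)" using b dl1 Xv by (simp add: gsimp)
    also have "Xv \<otimes> gcomm G Xv dl1 \<otimes> inv Xv = gcomm G Xv dl1" using conj_cent'[OF E4 Xv] .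
    finally show ?thesis .
  qed
  have e2c: "cent (Yv \<otimes> inv Xv)" using G5 by (simp add: defs)
  have e2m: "(Yv \<otimes> inv Xv) [^] m1 = \<one>"
  proof -
    have "(Yv \<otimes> inv Xv) [^] m1 = gcomm G b dl1 [^] m1 \<otimes> gcomm G Xv dl1 [^] m1"
      using e2e pow_mult_cent[OF E4, of "gcomm G b dl1"] b dl1 by simp
    also have "\<dots> = gcomm G b (dl1 [^] m1) \<otimes> gcomm G Xv (dl1 [^] m1)"
      using gcomm_pow_r[OF G7 b dl1] gcomm_pow_r[OF E4 Xv dl1] by simp
    finally show ?thesis using gcomm_cent_r[OF dm1 b] gcomm_cent_r[OF dm1 Xv] by simp
  qed
  have zd: "gcomm G Z2 dl = gcomm G Xv dl" using gcomm_eqz_l[OF G6 Z2 Xv dl] .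
  have zdc: "cent (gcomm G Z2 dl)" using zd E3 by simp
  define K where "K = gcomm G Z2 dl \<otimes> gcomm G dl b1"
  have Kc: "cent K" using cent_mult[OF zdc G2] by (simp add: K_def)
  have YK: "Yv = Z2 \<otimes> K"
  proof -
    have "Yv = gcomm G (a \<otimes> dl) b1" using a b by (simp add: Yv_def dl_def gsimp)
    also have "\<dots> = (inv dl \<otimes> Z2 \<otimes> dl) \<otimes> gcomm G dl b1" using gcomm_mult_l[OF a dl b1] by (simp add: Z2_def)
    also have "\<dots> = Z2 \<otimes> K" using conj_comm[OF Z2 dl] Z2 dl b1 by (simp add: K_def gsimp)
    finally show ?thesis .
  qed
  have e1e: "Z2 \<otimes> inv Xv = (Yv \<otimes> inv Xv) \<otimes> inv K"
  proof -
    have K: "K \<in> carrier G" using Kc centD by blast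
    have "Z2 = Yv \<otimes> inv K" using YK Z2 K by (simp add: gsimp)
    hence "Z2 \<otimes> inv Xv = Yv \<otimes> (inv K \<otimes> inv Xv)" using Yv K Xv by (simp add: gsimp)
    also have "inv K \<otimes> inv Xv = inv Xv \<otimes> inv K" using cent_comm[OF cent_inv[OF Kc], of "inv Xv"] Xv by simp
    finally show ?thesis using Yv K Xv by (simp add: gsimp)
  qed
  have Km: "K [^] m1 = \<one>"
  proof -
    have "K [^] m1 = gcomm G Z2 dl [^] m1 \<otimes> gcomm G dl b1 [^] m1"
      using pow_mult_cent'[OF zdc, of "gcomm G dl b1" m1] dl b1 by (simp add: K_def)
    also have "\<dots> = gcomm G Z2 (dl [^] m1) \<otimes> gcomm G (dl [^] m1) b1"
      using gcomm_pow_r[OF zdc Z2 dl] gcomm_pow_l[OF G2 dl b1] by simp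
    finally show ?thesis using gcomm_cent_r[OF dm Z2] gcomm_cent_l[OF dm b1] by simp
  qed
  have e1m: "(Z2 \<otimes> inv Xv) [^] m1 = \<one>"
    using e1e pow_mult_cent'[OF e2c, of "inv K" m1] Km e2m Kc centD pow_inv by simp
  have C3a: "(gcomm G a b1 \<otimes> inv (gcomm G b a1)) [^] m1 = \<one>" using e1m by (simp add: defs)
  have C3b: "(gcomm G b b1 \<otimes> inv (gcomm G b a1)) [^] m1 = \<one>" using e2m by (simp add: defs)

  define p where "p = gcomm G cc a"
  define p1 where "p1 = gcomm G cc a1"
  define r where "r = gcomm G cc b"
  define sv where "sv = gcomm G cc b1"
  have pc': "cent p" and p1c: "cent p1" and rc: "cent r" and svc: "cent sv"
    using r6a r6c G1 F2 by (simp_all add: p_def p1_def r_def sv_def)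
  have p: "p \<in> carrier G" and p1: "p1 \<in> carrier G" and r: "r \<in> carrier G" and sv: "sv \<in> carrier G"
    using pc' p1c rc svc centD by blast+
  have am: "cent (a [^] m2)" using pow_ab_cent[OF a b ra pb dv] .
  have a1m: "cent (a1 [^] m2)" using pow_ab_cent[OF a1 b1 ra1 pb1 dv] .
  have pm2: "p [^] m2 = \<one>" using gcomm_pow_r[OF pc'[unfolded p_def] cc a, of m2] gcomm_cent_r[OF am cc] by (simp add: p_def)
  have p1m2: "p1 [^] m2 = \<one>" using gcomm_pow_r[OF p1c[unfolded p1_def] cc a1, of m2] gcomm_cent_r[OF a1m cc] by (simp add: p1_def)
  have C4a: "gcomm3 G a a1 a [^] m2 = \<one>" using pm2 by (simp add: gcomm3_def defs p_def[symmetric])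
  have cinva: "gcomm G cc (inv a) = inv p" using gcomm_inv_r_c[OF pc'[unfolded p_def] cc a] by (simp add: p_def)
  have cinva_c: "cent (gcomm G cc (inv a))" using cinva cent_inv[OF pc'] by simp
  have w4b: "gcomm G cc (a1 \<otimes> inv a) = p1 \<otimes> inv p"
    using gcomm_mult_r_cc[OF p1c[unfolded p1_def] cinva_c cc a1 inv_closed[OF a]] cinva by (simp add: p1_def)
  have C4b: "gcomm3 G a a1 (a1 \<otimes> inv a) [^] gcd m2 (m2 choose 2) = \<one>"
  proof -
    have x: "(p1 \<otimes> inv p) [^] m2 = \<one>" using cent_pow_eq_one[OF p1c pc'] pm2 p1m2 by simp
    have e1: "gcomm G (a [^] m2) a1 = cc [^] m2 \<otimes> p [^] (m2 choose 2)"
      using gcomm_pow2_l[OF a a1 r6a[unfolded cc_def]] by (simp add: cc_def p_def)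
    have e2: "gcomm G a (a1 [^] m2) = cc [^] m2 \<otimes> p1 [^] (m2 choose 2)"
      using gcomm_pow2_r[OF a a1 r6c[unfolded cc_def]] by (simp add: cc_def p1_def)
    have "cc [^] m2 \<otimes> p [^] (m2 choose 2) = cc [^] m2 \<otimes> p1 [^] (m2 choose 2)"
      using e1 e2 gcomm_cent_l[OF am a1] gcomm_cent_r[OF a1m a] by simp
    hence "p [^] (m2 choose 2) = p1 [^] (m2 choose 2)" using cc p p1 by simp
    hence y: "(p1 \<otimes> inv p) [^] (m2 choose 2) = \<one>" using cent_pow_eq_one[OF p1c pc'] by simp
    show ?thesis using pow_gcd_one[OF _ x y] p p1 w4b by (simp add: gcomm3_def defs)
  qed
  have w4c: "gcomm G cc (b \<otimes> inv a) = r \<otimes> inv p"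
    using gcomm_mult_r_cc[OF rc[unfolded r_def] cinva_c cc b inv_closed[OF a]] cinva by (simp add: r_def)
  have rp: "p [^] m1 = r [^] m1" using eqpow_r[OF cc a b pc'[unfolded p_def] rc[unfolded r_def] ra] by (simp add: p_def r_def)
  have C4c: "gcomm3 G a a1 (b \<otimes> inv a) [^] m1 = \<one>"
    using cent_pow_eq_one[OF rc pc'] rp w4c by (simp add: gcomm3_def defs)

  define C where "C = m1 choose 2"
  define ta where "ta = gcomm G Xv a"
  define ta1 where "ta1 = gcomm G Xv a1"
  define tb where "tb = gcomm G Xv b"
  define tb1 where "tb1 = gcomm G Xv b1"
  have tac: "cent ta" and ta1c: "cent ta1" and tbc: "cent tb" and tb1c: "cent tb1"
    using r6b r6d G3 G4 by (simp_all add: ta_def ta1_def tb_def tb1_def)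
  have ta: "ta \<in> carrier G" and ta1: "ta1 \<in> carrier G" and tb: "tb \<in> carrier G" and tb1: "tb1 \<in> carrier G"
    using tac ta1c tbc tb1c centD by blast+
  have zX: "\<And>w. w \<in> carrier G \<Longrightarrow> gcomm G Z2 w = gcomm G Xv w" using gcomm_eqz_l[OF G6 Z2 Xv] by blast
  have yX: "\<And>w. w \<in> carrier G \<Longrightarrow> gcomm G Yv w = gcomm G Xv w" using gcomm_eqz_l[OF G5 Yv Xv] by blast
  have e1c: "cent (Z2 \<otimes> inv Xv)" using G6 .
  have Z2m: "Z2 [^] m1 = Xv [^] m1"
  proof -
    have "Z2 = (Z2 \<otimes> inv Xv) \<otimes> Xv" using Z2 Xv by (simp add: gsimp)
    hence "Z2 [^] m1 = (Z2 \<otimes> inv Xv) [^] m1 \<otimes> Xv [^] m1" using pow_mult_cent'[OF e1c Xv, of m1] by simp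
    thus ?thesis using e1m Xv by simp
  qed
  have Ym: "Yv [^] m1 = Xv [^] m1"
  proof -
    have "Yv = (Yv \<otimes> inv Xv) \<otimes> Xv" using Yv Xv by (simp add: gsimp)
    hence "Yv [^] m1 = (Yv \<otimes> inv Xv) [^] m1 \<otimes> Xv [^] m1" using pow_mult_cent'[OF e2c Xv, of m1] by simp
    thus ?thesis using e2m Xv by simp
  qed
  have am1: "gcomm G (a [^] m1) y = gcomm G (b [^] m1) y" if "y \<in> carrier G" for y
  proof -
    have "gcomm G ((a [^] m1 \<otimes> inv (b [^] m1)) \<otimes> b [^] m1) y = gcomm G (b [^] m1) y"
      using gcomm_centmul_l[OF ra _ that] b by simp
    moreover have "(a [^] m1 \<otimes> inv (b [^] m1)) \<otimes> b [^] m1 = a [^] m1" using a b by (simp add: gsimp)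
    ultimately show ?thesis by simp
  qed
  have a1m1: "gcomm G x (a1 [^] m1) = gcomm G x (b1 [^] m1)" if "x \<in> carrier G" for x
  proof -
    have "gcomm G x ((a1 [^] m1 \<otimes> inv (b1 [^] m1)) \<otimes> b1 [^] m1) = gcomm G x (b1 [^] m1)"
      using gcomm_centmul_r[OF ra1 _ that] b1 by simp
    moreover have "(a1 [^] m1 \<otimes> inv (b1 [^] m1)) \<otimes> b1 [^] m1 = a1 [^] m1" using a1 b1 by (simp add: gsimp)
    ultimately show ?thesis by simp
  qed
  have Eq1: "cc [^] m1 \<otimes> p1 [^] C = Xv [^] m1 \<otimes> tb1 [^] C"
  proof -
    have "cc [^] m1 \<otimes> p1 [^] C = gcomm G a (a1 [^] m1)"
      using gcomm_pow2_r[OF a a1 r6c[unfolded cc_def]] by (simp add: cc_def p1_def C_def)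
    also have "\<dots> = gcomm G a (b1 [^] m1)" using a1m1[OF a] .
    also have "\<dots> = Z2 [^] m1 \<otimes> gcomm G Z2 b1 [^] C"
      using gcomm_pow2_r[OF a b1, of m1] zX[OF b1] tb1c by (simp add: Z2_def C_def tb1_def)
    finally show ?thesis using Z2m zX[OF b1] by (simp add: tb1_def)
  qed
  have Eq2: "cc [^] m1 \<otimes> p [^] C = Xv [^] m1 \<otimes> tb [^] C"
  proof -
    have "cc [^] m1 \<otimes> p [^] C = gcomm G (a [^] m1) a1"
      using gcomm_pow2_l[OF a a1 r6a[unfolded cc_def]] by (simp add: cc_def p_def C_def)
    also have "\<dots> = gcomm G (b [^] m1) a1" using am1[OF a1] .
    also have "\<dots> = Xv [^] m1 \<otimes> tb [^] C"
      using gcomm_pow2_l[OF b a1, of m1] tbc by (simp add: Xv_def C_def tb_def)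
    finally show ?thesis .
  qed
  have Eq3: "ta1 [^] C = tb1 [^] C"
  proof -
    have "Xv [^] m1 \<otimes> ta1 [^] C = gcomm G b (a1 [^] m1)"
      using gcomm_pow2_r[OF b a1, of m1] ta1c by (simp add: Xv_def C_def ta1_def)
    also have "\<dots> = gcomm G b (b1 [^] m1)" using a1m1[OF b] .
    also have "\<dots> = Yv [^] m1 \<otimes> gcomm G Yv b1 [^] C"
      using gcomm_pow2_r[OF b b1, of m1] yX[OF b1] tb1c by (simp add: Yv_def C_def tb1_def)
    also have "\<dots> = Xv [^] m1 \<otimes> tb1 [^] C" using Ym yX[OF b1] by (simp add: tb1_def)
    finally show ?thesis using Xv ta1 tb1 by simp
  qed
  have Eq4: "ta [^] C = tb [^] C"
  proof -
    have "Xv [^] m1 \<otimes> ta [^] C = Z2 [^] m1 \<otimes> gcomm G Z2 a [^] C" using Z2m zX[OF a] by (simp add: ta_def)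
    also have "\<dots> = gcomm G (a [^] m1) b1"
      using gcomm_pow2_l[OF a b1, of m1] zX[OF a] tac by (simp add: Z2_def C_def ta_def)
    also have "\<dots> = gcomm G (b [^] m1) b1" using am1[OF b1] .
    also have "\<dots> = Yv [^] m1 \<otimes> gcomm G Yv b [^] C"
      using gcomm_pow2_l[OF b b1, of m1] yX[OF b] tbc by (simp add: Yv_def C_def tb_def)
    also have "\<dots> = Xv [^] m1 \<otimes> tb [^] C" using Ym yX[OF b] by (simp add: tb_def)
    finally show ?thesis using Xv ta tb by simp
  qed
  have J1: "r = ta"
  proof -
    have hw: "(inv (inv a1) \<otimes> gcomm G (gcomm G a (inv (inv a1))) b \<otimes> inv a1) \<otimes> (inv b \<otimes> gcomm G (gcomm G (inv a1) (inv b)) a \<otimes> b)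
       \<otimes> (inv a \<otimes> gcomm G (gcomm G b (inv a)) (inv a1) \<otimes> a) = \<one>"
      using hall_witt[OF a inv_closed[OF a1] b] .
    have t1: "inv (inv a1) \<otimes> gcomm G (gcomm G a (inv (inv a1))) b \<otimes> inv a1 = r"
      using conj_cent'[OF rc a1] a1 by (simp add: r_def cc_def)
    have t2: "inv b \<otimes> gcomm G (gcomm G (inv a1) (inv b)) a \<otimes> b = inv ta"
    proof -
      have "gcomm G (gcomm G (inv a1) (inv b)) a = gcomm G (inv Xv) a"
        using gcomm_eqz_l[OF E1] a1 b a Xv by simp
      also have "\<dots> = inv ta" using gcomm_inv_l_c[OF tac[unfolded ta_def] Xv a] Xv by (simp add: ta_def)
      finally show ?thesis using conj_cent[OF cent_inv[OF tac] b] by simp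
    qed
    have t3: "inv a \<otimes> gcomm G (gcomm G b (inv a)) (inv a1) \<otimes> a = \<one>"
      using gcomm_cent_l[OF E5 inv_closed[OF a1]] a by simp
    have "r \<otimes> inv ta = \<one>" using hw t1 t2 t3 r ta by simp
    thus ?thesis using eq_from_inv r ta by blast
  qed
  have J2: "sv = ta1"
  proof -
    have hw: "(inv (inv a1) \<otimes> gcomm G (gcomm G a (inv (inv a1))) b1 \<otimes> inv a1) \<otimes> (inv b1 \<otimes> gcomm G (gcomm G (inv a1) (inv b1)) a \<otimes> b1)
       \<otimes> (inv a \<otimes> gcomm G (gcomm G b1 (inv a)) (inv a1) \<otimes> a) = \<one>"
      using hall_witt[OF a inv_closed[OF a1] b1] .
    have t1: "inv (inv a1) \<otimes> gcomm G (gcomm G a (inv (inv a1))) b1 \<otimes> inv a1 = sv"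
      using conj_cent'[OF svc a1] a1 by (simp add: sv_def cc_def)
    have t2: "inv b1 \<otimes> gcomm G (gcomm G (inv a1) (inv b1)) a \<otimes> b1 = \<one>"
      using gcomm_cent_l[OF E6 a] b1 by simp
    have t3: "inv a \<otimes> gcomm G (gcomm G b1 (inv a)) (inv a1) \<otimes> a = inv ta1"
    proof -
      have "gcomm G (gcomm G b1 (inv a)) (inv a1) = gcomm G Xv (inv a1)"
        using gcomm_eqz_l[OF E2] a1 b1 a Xv by simp
      also have "\<dots> = inv ta1" using gcomm_inv_r_c[OF ta1c[unfolded ta1_def] Xv a1] by (simp add: ta1_def)
      finally show ?thesis using conj_cent[OF cent_inv[OF ta1c] a] by simp
    qed
    have "sv \<otimes> inv ta1 = \<one>" using hw t1 t2 t3 sv ta1 by simp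
    thus ?thesis using eq_from_inv sv ta1 by blast
  qed
  have key: "p1 [^] C \<otimes> inv (p [^] C) = tb1 [^] C \<otimes> inv (tb [^] C)"
  proof -
    define W where "W = inv (cc [^] m1) \<otimes> Xv [^] m1"
    have W: "W \<in> carrier G" using cc Xv by (simp add: W_def)
    have h1: "p1 [^] C = W \<otimes> tb1 [^] C" using Eq1 cc Xv p1 tb1
      by (simp add: W_def gsimp) (metis Eq1 cancelB nat_pow_closed)
    have h2: "p [^] C = W \<otimes> tb [^] C" using Eq2 cc Xv p tb
      by (simp add: W_def gsimp) (metis Eq2 cancelB nat_pow_closed)
    have "p1 [^] C \<otimes> inv (p [^] C) = W \<otimes> (tb1 [^] C \<otimes> inv (tb [^] C)) \<otimes> inv W"
      using h1 h2 W tb tb1 by (simp add: gsimp)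
    also have "\<dots> = tb1 [^] C \<otimes> inv (tb [^] C)"
      using conj_cent'[OF cent_mult[OF cent_pow[OF tb1c] cent_inv[OF cent_pow[OF tbc]]] W] .
    finally show ?thesis .
  qed
  have w4d: "gcomm G cc (b \<otimes> inv b1 \<otimes> inv (a \<otimes> inv a1)) = (r \<otimes> inv sv) \<otimes> (p1 \<otimes> inv p)"
  proof -
    have svinv: "gcomm G cc (inv b1) = inv sv" using gcomm_inv_r_c[OF svc[unfolded sv_def] cc b1] by (simp add: sv_def)
    have c1: "gcomm G cc (b \<otimes> inv b1) = r \<otimes> inv sv"
      using gcomm_mult_r_cc[OF rc[unfolded r_def] _ cc b inv_closed[OF b1]] svinv cent_inv[OF svc] by (simp add: r_def)
    have "b \<otimes> inv b1 \<otimes> inv (a \<otimes> inv a1) = (b \<otimes> inv b1) \<otimes> (a1 \<otimes> inv a)" using a b a1 b1 by (simp add: gsimp)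
    moreover have "gcomm G cc ((b \<otimes> inv b1) \<otimes> (a1 \<otimes> inv a)) = gcomm G cc (b \<otimes> inv b1) \<otimes> gcomm G cc (a1 \<otimes> inv a)"
      using gcomm_mult_r_cc[OF _ _ cc] c1 w4b cent_mult[OF rc cent_inv[OF svc]] cent_mult[OF p1c cent_inv[OF pc']] a b a1 b1
      by simp
    ultimately show ?thesis using c1 w4b by simp
  qed
  have Rc: "cent (r \<otimes> inv sv)" and Sc: "cent (p1 \<otimes> inv p)"
    using cent_mult[OF rc cent_inv[OF svc]] cent_mult[OF p1c cent_inv[OF pc']] by auto
  have pw: "((r \<otimes> inv sv) \<otimes> (p1 \<otimes> inv p)) [^] k = (r [^] k \<otimes> inv (sv [^] k)) \<otimes> (p1 [^] k \<otimes> inv (p [^] k))" for k :: nat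
    using pow_mult_cent[OF Sc, of "r \<otimes> inv sv" k] pow_mult_cent[OF cent_inv[OF svc], of r k]
      pow_mult_cent[OF cent_inv[OF pc'], of p1 k] r sv p p1 by (simp add: pow_inv)
  have m4d: "((r \<otimes> inv sv) \<otimes> (p1 \<otimes> inv p)) [^] m1 = \<one>"
  proof -
    have sp: "p1 [^] m1 = sv [^] m1" using eqpow_r[OF cc a1 b1 p1c[unfolded p1_def] svc[unfolded sv_def] ra1] by (simp add: p1_def sv_def)
    show ?thesis using pw[of m1] rp[symmetric] sp p sv by (simp add: gsimp)
  qed
  have C4d': "((r \<otimes> inv sv) \<otimes> (p1 \<otimes> inv p)) [^] C = \<one>"
  proof -
    have "p1 [^] C \<otimes> inv (p [^] C) = sv [^] C \<otimes> inv (r [^] C)" using key Eq3 Eq4 J1 J2 by simp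
    thus ?thesis using pw[of C] r sv p p1 by (simp add: gsimp)
  qed
  have C4d: "gcomm3 G a a1 (b \<otimes> inv b1 \<otimes> inv (a \<otimes> inv a1)) [^] gcd m1 (m1 choose 2) = \<one>"
    using pow_gcd_one[OF _ m4d C4d'[unfolded C_def]] w4d r sv p p1 by (simp add: gcomm3_def defs)
  show ?thesis using C3a C3b C4a C4b C4c C4d by blast
qed

end

context group begin

lemma sq_one: "x \<in> carrier G \<Longrightarrow> x = inv x \<Longrightarrow> x [^] (2::nat) = \<one>"
  by (metis numeral_2_eq_2 nat_pow_Suc nat_pow_0 l_one r_inv)

lemma claim5:
  assumes a: "a \<in> carrier G" and b: "b \<in> carrier G" and a1: "a1 \<in> carrier G" and b1: "b1 \<in> carrier G"
    and a2: "a2 \<in> carrier G" and b2: "b2 \<in> carrier G"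
    and ra1: "cent (a1 [^] (m1::nat) \<otimes> inv (b1 [^] m1))" and pb1: "cent (b1 [^] (m2::nat))" and dv: "m1 dvd m2"
    and cab: "cent (gcomm G a b)" and ca1b1: "cent (gcomm G a1 b1)" and ca2b2: "cent (gcomm G a2 b2)"
    and r5a: "cent (gcomm G (inv a) (inv b1) \<otimes> inv (gcomm G b a1))"
    and r5b: "cent (gcomm G (inv b) (inv b1) \<otimes> inv (gcomm G b a1))"
    and r6a: "cent (gcomm G (gcomm G a a1) a)" and r6b: "cent (gcomm G (gcomm G b a1) a)"
    and r6c: "cent (gcomm G (gcomm G a a1) a1)" and r6d: "cent (gcomm G (gcomm G b a1) a1)"
    and s5a: "cent (gcomm G (inv a1) (inv b2) \<otimes> inv (gcomm G b1 a2))"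
    and s5b: "cent (gcomm G (inv b1) (inv b2) \<otimes> inv (gcomm G b1 a2))"
    and s6a: "cent (gcomm G (gcomm G a1 a2) a1)" and s6b: "cent (gcomm G (gcomm G b1 a2) a1)"
    and s6c: "cent (gcomm G (gcomm G a1 a2) a2)" and s6d: "cent (gcomm G (gcomm G b1 a2) a2)"
    and far1: "cent (gcomm G a a2)" and far2: "cent (gcomm G b a2)"
    and t1: "cent (gcomm G (gcomm G a a1) (gcomm G a1 a2))" and t2: "cent (gcomm G (gcomm G a a1) (gcomm G b1 a2))"
    and t3: "cent (gcomm G (gcomm G b a1) (gcomm G a1 a2))" and t4: "cent (gcomm G (gcomm G b a1) (gcomm G b1 a2))"
  shows "gcomm4 G a a1 a2 a1 [^] gcd 2 m2 = \<one> \<and> gcomm4 G a a1 a2 (b1 \<otimes> inv a1) [^] gcd 2 m1 = \<one>"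
proof -
  interpret P: group_hom G bar pi by (rule pi_hom)
  have gb: "group bar" by (rule group_bar)
  note push = pi_gcomm P.hom_mult P.hom_inv
  have pc: "cent x \<longleftrightarrow> pi x = \<one>\<^bsub>bar\<^esub>" if "x \<in> carrier G" for x using pi_one_iff[OF that] by simp
  have pe: "cent (x \<otimes> inv y) \<longleftrightarrow> pi x = pi y" if "x \<in> carrier G" "y \<in> carrier G" for x y
    using pi_eq_iff[OF that] by simp
  have car: "pi a \<in> carrier bar" "pi b \<in> carrier bar" "pi a1 \<in> carrier bar" "pi b1 \<in> carrier bar"
    "pi a2 \<in> carrier bar" "pi b2 \<in> carrier bar" using a b a1 b1 a2 b2 by simp_all
  have hQ1: "gcomm bar (pi a) (pi b) = \<one>\<^bsub>bar\<^esub>" "gcomm bar (pi a1) (pi b1) = \<one>\<^bsub>bar\<^esub>"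
    "gcomm bar (inv\<^bsub>bar\<^esub> (pi a)) (inv\<^bsub>bar\<^esub> (pi b1)) \<otimes>\<^bsub>bar\<^esub> inv\<^bsub>bar\<^esub> (gcomm bar (pi b) (pi a1)) = \<one>\<^bsub>bar\<^esub>"
    "gcomm bar (inv\<^bsub>bar\<^esub> (pi b)) (inv\<^bsub>bar\<^esub> (pi b1)) \<otimes>\<^bsub>bar\<^esub> inv\<^bsub>bar\<^esub> (gcomm bar (pi b) (pi a1)) = \<one>\<^bsub>bar\<^esub>"
    "gcomm bar (gcomm bar (pi a) (pi a1)) (pi a) = \<one>\<^bsub>bar\<^esub>" "gcomm bar (gcomm bar (pi b) (pi a1)) (pi a) = \<one>\<^bsub>bar\<^esub>"
    "gcomm bar (gcomm bar (pi a) (pi a1)) (pi a1) = \<one>\<^bsub>bar\<^esub>" "gcomm bar (gcomm bar (pi b) (pi a1)) (pi a1) = \<one>\<^bsub>bar\<^esub>"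
    using a b a1 b1 cab ca1b1 r5a r5b r6a r6b r6c r6d by (simp_all add: pc push del: one_FactGroup mult_FactGroup)
  have hQ1': "gcomm bar (pi a1) (pi b1) = \<one>\<^bsub>bar\<^esub>" "gcomm bar (pi a2) (pi b2) = \<one>\<^bsub>bar\<^esub>"
    "gcomm bar (inv\<^bsub>bar\<^esub> (pi a1)) (inv\<^bsub>bar\<^esub> (pi b2)) \<otimes>\<^bsub>bar\<^esub> inv\<^bsub>bar\<^esub> (gcomm bar (pi b1) (pi a2)) = \<one>\<^bsub>bar\<^esub>"
    "gcomm bar (inv\<^bsub>bar\<^esub> (pi b1)) (inv\<^bsub>bar\<^esub> (pi b2)) \<otimes>\<^bsub>bar\<^esub> inv\<^bsub>bar\<^esub> (gcomm bar (pi b1) (pi a2)) = \<one>\<^bsub>bar\<^esub>"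
    "gcomm bar (gcomm bar (pi a1) (pi a2)) (pi a1) = \<one>\<^bsub>bar\<^esub>" "gcomm bar (gcomm bar (pi b1) (pi a2)) (pi a1) = \<one>\<^bsub>bar\<^esub>"
    "gcomm bar (gcomm bar (pi a1) (pi a2)) (pi a2) = \<one>\<^bsub>bar\<^esub>" "gcomm bar (gcomm bar (pi b1) (pi a2)) (pi a2) = \<one>\<^bsub>bar\<^esub>"
    using a1 b1 a2 b2 ca1b1 ca2b2 s5a s5b s6a s6b s6c s6d by (simp_all add: pc push del: one_FactGroup mult_FactGroup)
  note Q1 = group.QB1[OF gb car(1-4) hQ1]
  note Q1' = group.QB1[OF gb car(3-6) hQ1']
  have hQ2: "gcomm bar (pi a) (pi a2) = \<one>\<^bsub>bar\<^esub>" "gcomm bar (pi b) (pi a2) = \<one>\<^bsub>bar\<^esub>"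
    "gcomm bar (gcomm bar (pi a) (pi a1)) (gcomm bar (pi a1) (pi a2)) = \<one>\<^bsub>bar\<^esub>"
    "gcomm bar (gcomm bar (pi a) (pi a1)) (gcomm bar (pi b1) (pi a2)) = \<one>\<^bsub>bar\<^esub>"
    "gcomm bar (gcomm bar (pi b) (pi a1)) (gcomm bar (pi a1) (pi a2)) = \<one>\<^bsub>bar\<^esub>"
    "gcomm bar (gcomm bar (pi b) (pi a1)) (gcomm bar (pi b1) (pi a2)) = \<one>\<^bsub>bar\<^esub>"
    using a b a1 b1 a2 far1 far2 t1 t2 t3 t4 by (simp_all add: pc push del: one_FactGroup mult_FactGroup)
  have Q2: "gcomm bar (gcomm bar (gcomm bar (pi a) (pi a1)) (pi a2)) (pi a1) = \<one>\<^bsub>bar\<^esub> \<and> gcomm bar (gcomm bar (gcomm bar (pi a) (pi a1)) (pi a2)) (pi b1) = \<one>\<^bsub>bar\<^esub>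
    \<and> gcomm bar (gcomm bar (gcomm bar (pi b) (pi a1)) (pi a2)) (pi a1) = \<one>\<^bsub>bar\<^esub>
    \<and> gcomm bar (inv\<^bsub>bar\<^esub> (pi a2)) (inv\<^bsub>bar\<^esub> (pi a1)) = inv\<^bsub>bar\<^esub> (gcomm bar (pi a1) (pi a2)) \<and> gcomm bar (inv\<^bsub>bar\<^esub> (pi a2)) (inv\<^bsub>bar\<^esub> (pi b1)) = inv\<^bsub>bar\<^esub> (gcomm bar (pi b1) (pi a2))
    \<and> gcomm bar (pi a1) (inv\<^bsub>bar\<^esub> (gcomm bar (pi a) (pi a1))) = \<one>\<^bsub>bar\<^esub> \<and> gcomm bar (pi b1) (inv\<^bsub>bar\<^esub> (gcomm bar (pi a) (pi a1))) = \<one>\<^bsub>bar\<^esub>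
    \<and> gcomm bar (pi a1) (inv\<^bsub>bar\<^esub> (gcomm bar (pi b) (pi a1))) = \<one>\<^bsub>bar\<^esub>
    \<and> gcomm bar (inv\<^bsub>bar\<^esub> (pi a1)) (inv\<^bsub>bar\<^esub> (gcomm bar (pi a1) (pi a2))) = \<one>\<^bsub>bar\<^esub> \<and> gcomm bar (inv\<^bsub>bar\<^esub> (pi a1)) (inv\<^bsub>bar\<^esub> (gcomm bar (pi b1) (pi a2))) = \<one>\<^bsub>bar\<^esub>
    \<and> gcomm bar (gcomm bar (pi a1) (pi a2)) (inv\<^bsub>bar\<^esub> (pi a)) = gcomm bar (gcomm bar (pi a) (pi a1)) (pi a2)
    \<and> gcomm bar (gcomm bar (pi b1) (pi a2)) (inv\<^bsub>bar\<^esub> (pi a)) = gcomm bar (gcomm bar (pi b) (pi a1)) (pi a2)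
    \<and> gcomm bar (gcomm bar (pi a1) (pi a2)) (inv\<^bsub>bar\<^esub> (pi b)) = gcomm bar (gcomm bar (pi b) (pi a1)) (pi a2)"
    apply (rule group.QB2[OF gb car(1-5)])
    using hQ1 hQ1' hQ2 Q1 Q1' by simp_all
  define cc where "cc = gcomm G a a1"
  define Xv where "Xv = gcomm G b a1"
  define c1 where "c1 = gcomm G a1 a2"
  define cb where "cb = gcomm G b1 a2"
  define D where "D = gcomm G cc a2"
  define DX where "DX = gcomm G Xv a2"
  have cc: "cc \<in> carrier G" and Xv: "Xv \<in> carrier G" and c1: "c1 \<in> carrier G" and cbc: "cb \<in> carrier G"
    and D: "D \<in> carrier G" and DX: "DX \<in> carrier G"
    using a b a1 b1 a2 by (simp_all add: cc_def Xv_def c1_def cb_def D_def DX_def)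
  note defs = cc_def[symmetric] Xv_def[symmetric] c1_def[symmetric] cb_def[symmetric] D_def[symmetric] DX_def[symmetric]
  have K1: "cent (gcomm G D a1)" and K2: "cent (gcomm G D b1)" and K3: "cent (gcomm G DX a1)"
    and K4: "cent (gcomm G (inv a2) (inv a1) \<otimes> inv (inv c1))" and K8: "cent (gcomm G (inv a2) (inv b1) \<otimes> inv (inv cb))"
    and K5: "cent (gcomm G a1 (inv cc))" and K9: "cent (gcomm G b1 (inv cc))" and K12: "cent (gcomm G a1 (inv Xv))"
    and K6: "cent (gcomm G (inv a1) (inv c1))" and K10: "cent (gcomm G (inv a1) (inv cb))"
    and K7: "cent (gcomm G c1 (inv a) \<otimes> inv D)" and K11: "cent (gcomm G cb (inv a) \<otimes> inv DX)"
    and K13: "cent (gcomm G c1 (inv b) \<otimes> inv DX)"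
    using Q2 a b a1 b1 a2 
    by (simp_all add: cc_def Xv_def c1_def cb_def D_def DX_def pc pe push group.r_inv[OF gb] group.l_inv[OF gb] del: one_FactGroup mult_FactGroup)

  have cc1: "cent (gcomm G cc c1)" and ccb: "cent (gcomm G cc cb)" and Xc1: "cent (gcomm G Xv c1)"
    and Xcb: "cent (gcomm G Xv cb)" using t1 t2 t3 t4 by (simp_all add: defs)
  have c1cc: "cent (gcomm G c1 cc)" using cent_inv[OF cc1] gcomm_inv_swap[OF cc c1] by simp
  have cbcc: "cent (gcomm G cb cc)" using cent_inv[OF ccb] gcomm_inv_swap[OF cc cbc] by simp
  have c1X: "cent (gcomm G c1 Xv)" using cent_inv[OF Xc1] gcomm_inv_swap[OF Xv c1] by simp
  have DA1: "D \<in> carrier G" using D .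
  have SA: "gcomm G D a1 = gcomm G c1 cc"
  proof -
    have hw: "(inv (inv a2) \<otimes> gcomm G (gcomm G cc (inv (inv a2))) a1 \<otimes> inv a2) \<otimes> (inv a1 \<otimes> gcomm G (gcomm G (inv a2) (inv a1)) cc \<otimes> a1)
       \<otimes> (inv cc \<otimes> gcomm G (gcomm G a1 (inv cc)) (inv a2) \<otimes> cc) = \<one>"
      using hall_witt[OF cc inv_closed[OF a2] a1] .
    have u1: "inv (inv a2) \<otimes> gcomm G (gcomm G cc (inv (inv a2))) a1 \<otimes> inv a2 = gcomm G D a1"
      using conj_cent'[OF K1 a2] a2 by (simp add: D_def)
    have u2: "inv a1 \<otimes> gcomm G (gcomm G (inv a2) (inv a1)) cc \<otimes> a1 = inv (gcomm G c1 cc)"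
    proof -
      have "gcomm G (gcomm G (inv a2) (inv a1)) cc = gcomm G (inv c1) cc" using gcomm_eqz_l[OF K4] a1 a2 c1 cc by simp
      also have "\<dots> = inv (gcomm G c1 cc)" using gcomm_inv_l_c[OF c1cc c1 cc] .
      finally show ?thesis using conj_cent[OF cent_inv[OF c1cc] a1] by simp
    qed
    have u3: "inv cc \<otimes> gcomm G (gcomm G a1 (inv cc)) (inv a2) \<otimes> cc = \<one>"
      using gcomm_cent_l[OF K5 inv_closed[OF a2]] cc by simp
    have "gcomm G D a1 \<otimes> inv (gcomm G c1 cc) = \<one>" using hw u1 u2 u3 D a1 c1 cc by simp
    thus ?thesis using eq_from_inv D a1 c1 cc by simp
  qed
  have SB: "gcomm G cc c1 = gcomm G D a1"
  proof -
    have hw: "(inv (inv a1) \<otimes> gcomm G (gcomm G a (inv (inv a1))) c1 \<otimes> inv a1) \<otimes> (inv c1 \<otimes> gcomm G (gcomm G (inv a1) (inv c1)) a \<otimes> c1)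
       \<otimes> (inv a \<otimes> gcomm G (gcomm G c1 (inv a)) (inv a1) \<otimes> a) = \<one>"
      using hall_witt[OF a inv_closed[OF a1] c1] .
    have u1: "inv (inv a1) \<otimes> gcomm G (gcomm G a (inv (inv a1))) c1 \<otimes> inv a1 = gcomm G cc c1"
      using conj_cent'[OF cc1 a1] a1 by (simp add: cc_def)
    have u2: "inv c1 \<otimes> gcomm G (gcomm G (inv a1) (inv c1)) a \<otimes> c1 = \<one>"
      using gcomm_cent_l[OF K6 a] c1 by simp
    have u3: "inv a \<otimes> gcomm G (gcomm G c1 (inv a)) (inv a1) \<otimes> a = inv (gcomm G D a1)"
    proof -
      have "gcomm G (gcomm G c1 (inv a)) (inv a1) = gcomm G D (inv a1)" using gcomm_eqz_l[OF K7] a a1 c1 D by simp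
      also have "\<dots> = inv (gcomm G D a1)" using gcomm_inv_r_c[OF K1 D a1] .
      finally show ?thesis using conj_cent[OF cent_inv[OF K1] a] by simp
    qed
    have "gcomm G cc c1 \<otimes> inv (gcomm G D a1) = \<one>" using hw u1 u2 u3 D a1 c1 cc by simp
    thus ?thesis using eq_from_inv D a1 c1 cc by simp
  qed
  have Da1_2: "gcomm G D a1 [^] (2::nat) = \<one>"
  proof -
    have "gcomm G D a1 = inv (gcomm G D a1)" using SA SB gcomm_inv_swap[OF c1 cc] by simp
    thus ?thesis using sq_one D a1 by simp
  qed
  have a1m: "cent (a1 [^] m2)" using pow_ab_cent[OF a1 b1 ra1 pb1 dv] .
  have Da1_m: "gcomm G D a1 [^] m2 = \<one>"
    using gcomm_pow_r[OF K1 D a1, of m2] gcomm_cent_r[OF a1m D] by simp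
  have C5a: "gcomm4 G a a1 a2 a1 [^] gcd 2 m2 = \<one>"
    using pow_gcd_one[OF _ Da1_2 Da1_m] D a1 by (simp add: gcomm4_def gcomm3_def defs)
  have SA': "gcomm G D b1 = gcomm G cb cc"
  proof -
    have hw: "(inv (inv a2) \<otimes> gcomm G (gcomm G cc (inv (inv a2))) b1 \<otimes> inv a2) \<otimes> (inv b1 \<otimes> gcomm G (gcomm G (inv a2) (inv b1)) cc \<otimes> b1)
       \<otimes> (inv cc \<otimes> gcomm G (gcomm G b1 (inv cc)) (inv a2) \<otimes> cc) = \<one>"
      using hall_witt[OF cc inv_closed[OF a2] b1] .
    have u1: "inv (inv a2) \<otimes> gcomm G (gcomm G cc (inv (inv a2))) b1 \<otimes> inv a2 = gcomm G D b1"
      using conj_cent'[OF K2 a2] a2 by (simp add: D_def)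
    have u2: "inv b1 \<otimes> gcomm G (gcomm G (inv a2) (inv b1)) cc \<otimes> b1 = inv (gcomm G cb cc)"
    proof -
      have "gcomm G (gcomm G (inv a2) (inv b1)) cc = gcomm G (inv cb) cc" using gcomm_eqz_l[OF K8] b1 a2 cbc cc by simp
      also have "\<dots> = inv (gcomm G cb cc)" using gcomm_inv_l_c[OF cbcc cbc cc] .
      finally show ?thesis using conj_cent[OF cent_inv[OF cbcc] b1] by simp
    qed
    have u3: "inv cc \<otimes> gcomm G (gcomm G b1 (inv cc)) (inv a2) \<otimes> cc = \<one>"
      using gcomm_cent_l[OF K9 inv_closed[OF a2]] cc by simp
    have "gcomm G D b1 \<otimes> inv (gcomm G cb cc) = \<one>" using hw u1 u2 u3 D b1 cbc cc by simp
    thus ?thesis using eq_from_inv D b1 cbc cc by simp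
  qed
  have SB': "gcomm G cc cb = gcomm G DX a1"
  proof -
    have hw: "(inv (inv a1) \<otimes> gcomm G (gcomm G a (inv (inv a1))) cb \<otimes> inv a1) \<otimes> (inv cb \<otimes> gcomm G (gcomm G (inv a1) (inv cb)) a \<otimes> cb)
       \<otimes> (inv a \<otimes> gcomm G (gcomm G cb (inv a)) (inv a1) \<otimes> a) = \<one>"
      using hall_witt[OF a inv_closed[OF a1] cbc] .
    have u1: "inv (inv a1) \<otimes> gcomm G (gcomm G a (inv (inv a1))) cb \<otimes> inv a1 = gcomm G cc cb"
      using conj_cent'[OF ccb a1] a1 by (simp add: cc_def)
    have u2: "inv cb \<otimes> gcomm G (gcomm G (inv a1) (inv cb)) a \<otimes> cb = \<one>"
      using gcomm_cent_l[OF K10 a] cbc by simp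
    have u3: "inv a \<otimes> gcomm G (gcomm G cb (inv a)) (inv a1) \<otimes> a = inv (gcomm G DX a1)"
    proof -
      have "gcomm G (gcomm G cb (inv a)) (inv a1) = gcomm G DX (inv a1)" using gcomm_eqz_l[OF K11] a a1 cbc DX by simp
      also have "\<dots> = inv (gcomm G DX a1)" using gcomm_inv_r_c[OF K3 DX a1] .
      finally show ?thesis using conj_cent[OF cent_inv[OF K3] a] by simp
    qed
    have "gcomm G cc cb \<otimes> inv (gcomm G DX a1) = \<one>" using hw u1 u2 u3 DX a1 cbc cc by simp
    thus ?thesis using eq_from_inv DX a1 cbc cc by simp
  qed
  have SA'': "gcomm G DX a1 = gcomm G c1 Xv"
  proof -
    have hw: "(inv (inv a2) \<otimes> gcomm G (gcomm G Xv (inv (inv a2))) a1 \<otimes> inv a2) \<otimes> (inv a1 \<otimes> gcomm G (gcomm G (inv a2) (inv a1)) Xv \<otimes> a1)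
       \<otimes> (inv Xv \<otimes> gcomm G (gcomm G a1 (inv Xv)) (inv a2) \<otimes> Xv) = \<one>"
      using hall_witt[OF Xv inv_closed[OF a2] a1] .
    have u1: "inv (inv a2) \<otimes> gcomm G (gcomm G Xv (inv (inv a2))) a1 \<otimes> inv a2 = gcomm G DX a1"
      using conj_cent'[OF K3 a2] a2 by (simp add: DX_def)
    have u2: "inv a1 \<otimes> gcomm G (gcomm G (inv a2) (inv a1)) Xv \<otimes> a1 = inv (gcomm G c1 Xv)"
    proof -
      have "gcomm G (gcomm G (inv a2) (inv a1)) Xv = gcomm G (inv c1) Xv" using gcomm_eqz_l[OF K4] a1 a2 c1 Xv by simp
      also have "\<dots> = inv (gcomm G c1 Xv)" using gcomm_inv_l_c[OF c1X c1 Xv] .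
      finally show ?thesis using conj_cent[OF cent_inv[OF c1X] a1] by simp
    qed
    have u3: "inv Xv \<otimes> gcomm G (gcomm G a1 (inv Xv)) (inv a2) \<otimes> Xv = \<one>"
      using gcomm_cent_l[OF K12 inv_closed[OF a2]] Xv by simp
    have "gcomm G DX a1 \<otimes> inv (gcomm G c1 Xv) = \<one>" using hw u1 u2 u3 DX a1 c1 Xv by simp
    thus ?thesis using eq_from_inv DX a1 c1 Xv by simp
  qed
  have SB'': "gcomm G Xv c1 = gcomm G DX a1"
  proof -
    have hw: "(inv (inv a1) \<otimes> gcomm G (gcomm G b (inv (inv a1))) c1 \<otimes> inv a1) \<otimes> (inv c1 \<otimes> gcomm G (gcomm G (inv a1) (inv c1)) b \<otimes> c1)
       \<otimes> (inv b \<otimes> gcomm G (gcomm G c1 (inv b)) (inv a1) \<otimes> b) = \<one>"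
      using hall_witt[OF b inv_closed[OF a1] c1] .
    have u1: "inv (inv a1) \<otimes> gcomm G (gcomm G b (inv (inv a1))) c1 \<otimes> inv a1 = gcomm G Xv c1"
      using conj_cent'[OF Xc1 a1] a1 by (simp add: Xv_def)
    have u2: "inv c1 \<otimes> gcomm G (gcomm G (inv a1) (inv c1)) b \<otimes> c1 = \<one>"
      using gcomm_cent_l[OF K6 b] c1 by simp
    have u3: "inv b \<otimes> gcomm G (gcomm G c1 (inv b)) (inv a1) \<otimes> b = inv (gcomm G DX a1)"
    proof -
      have "gcomm G (gcomm G c1 (inv b)) (inv a1) = gcomm G DX (inv a1)" using gcomm_eqz_l[OF K13] b a1 c1 DX by simp
      also have "\<dots> = inv (gcomm G DX a1)" using gcomm_inv_r_c[OF K3 DX a1] .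
      finally show ?thesis using conj_cent[OF cent_inv[OF K3] b] by simp
    qed
    have "gcomm G Xv c1 \<otimes> inv (gcomm G DX a1) = \<one>" using hw u1 u2 u3 DX a1 c1 Xv by simp
    thus ?thesis using eq_from_inv DX a1 c1 Xv by simp
  qed
  have DXa1: "gcomm G DX a1 = inv (gcomm G DX a1)" using SA'' SB'' gcomm_inv_swap[OF c1 Xv] by simp
  have Db1: "gcomm G D b1 = inv (gcomm G DX a1)"
  proof -
    have "inv (gcomm G cb cc) = gcomm G DX a1" using SB' gcomm_inv_swap[OF cbc cc] by simp
    hence "inv (inv (gcomm G cb cc)) = inv (gcomm G DX a1)" by simp
    thus ?thesis using SA' cbc cc by simp
  qed
  have Db1_2: "gcomm G D b1 [^] (2::nat) = \<one>"
  proof -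
    have "gcomm G D b1 = inv (gcomm G D b1)" using Db1 DXa1 DX a1 by (metis inv_inv gcomm_closed)
    thus ?thesis using sq_one D b1 by simp
  qed
  have Dia1: "gcomm G D (inv a1) = inv (gcomm G D a1)" using gcomm_inv_r_c[OF K1 D a1] .
  have tt: "gcomm G D (b1 \<otimes> inv a1) = gcomm G D b1 \<otimes> inv (gcomm G D a1)"
    using gcomm_mult_r_cc[OF K2 _ D b1 inv_closed[OF a1]] Dia1 cent_inv[OF K1] by simp
  have ttc: "cent (gcomm G D (b1 \<otimes> inv a1))" using tt cent_mult[OF K2 cent_inv[OF K1]] by simp
  have t2': "gcomm G D (b1 \<otimes> inv a1) [^] (2::nat) = \<one>"
    using tt cent_pow_eq_one[OF K2 K1] Db1_2 Da1_2 by simp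
  have dlm: "cent ((b1 \<otimes> inv a1) [^] m1)" using delta_pow_cent(2)[OF a1 b1 ca1b1 ra1] .
  have tm: "gcomm G D (b1 \<otimes> inv a1) [^] m1 = \<one>"
    using gcomm_pow_r[OF ttc D, of m1] gcomm_cent_r[OF dlm D] a1 b1 by simp
  have C5b: "gcomm4 G a a1 a2 (b1 \<otimes> inv a1) [^] gcd 2 m1 = \<one>"
    using pow_gcd_one[OF _ t2' tm] D a1 b1 by (simp add: gcomm4_def gcomm3_def defs)
  show ?thesis using C5a C5b by blast
qed

end

lemma nc_normal:
  fixes G (structure)
  assumes G: "group G" and Y: "Y \<subseteq> carrier G"
  shows "normal_closure G Y \<lhd> G"
proof -
  interpret group G by (rule G)
  let ?H = "\<Union>x \<in> Y. \<Union>y \<in> carrier G. {inv y \<otimes> x \<otimes> y}"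
  have Hc: "?H \<subseteq> carrier G" using Y by auto
  show ?thesis unfolding normal_closure_def
  proof (rule normal_generateI[OF Hc])
    fix h g assume h: "h \<in> ?H" and g: "g \<in> carrier G"
    then obtain x y where x: "x \<in> Y" and y: "y \<in> carrier G" and hh: "h = inv y \<otimes> x \<otimes> y" by blast
    have xc: "x \<in> carrier G" using x Y by auto
    have "g \<otimes> h \<otimes> inv g = inv (y \<otimes> inv g) \<otimes> x \<otimes> (y \<otimes> inv g)"
      using hh g y xc by (simp add: gsimp)
    thus "g \<otimes> h \<otimes> inv g \<in> ?H" using x y g by blast
  qed
qed

lemma nc_incl:
  fixes G (structure)
  assumes G: "group G" and Y: "Y \<subseteq> carrier G" and x: "x \<in> Y"
  shows "x \<in> normal_closure G Y"
proof -
  interpret group G by (rule G)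
  have xc: "x \<in> carrier G" using x Y by auto
  have "x = inv \<one> \<otimes> x \<otimes> \<one>" using xc by simp
  hence "x \<in> (\<Union>x \<in> Y. \<Union>y \<in> carrier G. {inv y \<otimes> x \<otimes> y})" using x by blast
  thus ?thesis unfolding normal_closure_def by (rule generate.incl)
qed

lemma gcomm3_FF_closed: "group G \<Longrightarrow> x \<in> carrier G \<Longrightarrow> y \<in> carrier G \<Longrightarrow> z \<in> carrier G \<Longrightarrow> gcomm3 G x y z \<in> carrier G"
  by (simp add: gcomm3_def group.gcomm_closed)

lemma relators_carrier:
  assumes n: "n \<ge> 3"
  shows "relators n m1 m2 \<subseteq> carrier (FF n)"
proof -
  interpret group "FF n" by (rule group_FF)
  have sc: "\<And>i b. 1 \<le> i \<Longrightarrow> i \<le> n - 1 \<Longrightarrow> sg i b \<in> carrier (FF n)" by (rule sg_carrier)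
  show ?thesis unfolding relators_def
    apply (intro Un_least)
    using n by (auto intro!: sc m_closed inv_closed nat_pow_closed gcomm_closed simp: gcomm3_def)
qed

lemma RR_normal: "n \<ge> 3 \<Longrightarrow> RR n m1 m2 \<lhd> FF n"
  unfolding RR_def using nc_normal[OF group_FF relators_carrier] by blast

lemma RF_normal:
  assumes n: "n \<ge> 3"
  shows "RF n m1 m2 \<lhd> FF n"
proof -
  interpret group "FF n" by (rule group_FF)
  interpret N: normal "RR n m1 m2" "FF n" by (rule RR_normal[OF n])
  let ?S = "{gcomm (FF n) r f | r f. r \<in> RR n m1 m2 \<and> f \<in> carrier (FF n)}"
  have Sc: "?S \<subseteq> carrier (FF n)" using N.subset by auto
  show ?thesis unfolding RF_def
  proof (rule normal_generateI[OF Sc])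
    fix h g assume h: "h \<in> ?S" and g: "g \<in> carrier (FF n)"
    then obtain r f where r: "r \<in> RR n m1 m2" and f: "f \<in> carrier (FF n)" and hh: "h = gcomm (FF n) r f" by blast
    have rc: "r \<in> carrier (FF n)" using r N.subset by auto
    have "g \<otimes>\<^bsub>FF n\<^esub> h \<otimes>\<^bsub>FF n\<^esub> inv\<^bsub>FF n\<^esub> g
        = gcomm (FF n) (g \<otimes>\<^bsub>FF n\<^esub> r \<otimes>\<^bsub>FF n\<^esub> inv\<^bsub>FF n\<^esub> g) (g \<otimes>\<^bsub>FF n\<^esub> f \<otimes>\<^bsub>FF n\<^esub> inv\<^bsub>FF n\<^esub> g)"
      using gcomm_conj'[OF rc f g] hh by simp
    moreover have "g \<otimes>\<^bsub>FF n\<^esub> r \<otimes>\<^bsub>FF n\<^esub> inv\<^bsub>FF n\<^esub> g \<in> RR n m1 m2" using N.inv_op_closed2[OF g r] .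
    moreover have "g \<otimes>\<^bsub>FF n\<^esub> f \<otimes>\<^bsub>FF n\<^esub> inv\<^bsub>FF n\<^esub> g \<in> carrier (FF n)" using g f by simp
    ultimately show "g \<otimes>\<^bsub>FF n\<^esub> h \<otimes>\<^bsub>FF n\<^esub> inv\<^bsub>FF n\<^esub> g \<in> ?S" by blast
  qed
qed

lemma quot_cent:
  assumes n: "n \<ge> 3" and rho: "\<rho> \<in> RR n m1 m2"
  shows "group.cent (FF n Mod RF n m1 m2) (RF n m1 m2 #>\<^bsub>FF n\<^esub> \<rho>)"
proof -
  interpret group "FF n" by (rule group_FF)
  interpret N: normal "RF n m1 m2" "FF n" by (rule RF_normal[OF n])
  interpret RN: normal "RR n m1 m2" "FF n" by (rule RR_normal[OF n])
  interpret P: group_hom "FF n" "FF n Mod RF n m1 m2" "\<lambda>x. RF n m1 m2 #>\<^bsub>FF n\<^esub> x"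
    unfolding group_hom_def group_hom_axioms_def
    using is_group N.factorgroup_is_group N.r_coset_hom_Mod by simp
  have rc: "\<rho> \<in> carrier (FF n)" using rho RN.subset by auto
  have "(RF n m1 m2 #>\<^bsub>FF n\<^esub> \<rho>) \<otimes>\<^bsub>FF n Mod RF n m1 m2\<^esub> y = y \<otimes>\<^bsub>FF n Mod RF n m1 m2\<^esub> (RF n m1 m2 #>\<^bsub>FF n\<^esub> \<rho>)"
    if y: "y \<in> carrier (FF n Mod RF n m1 m2)" for y
  proof -
    obtain f where f: "f \<in> carrier (FF n)" and yf: "y = RF n m1 m2 #>\<^bsub>FF n\<^esub> f"
      using y by (auto simp: carrier_FactGroup)
    have "gcomm (FF n) \<rho> f \<in> RF n m1 m2" unfolding RF_def using rho f by (blast intro: generate.incl)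
    hence "RF n m1 m2 #>\<^bsub>FF n\<^esub> gcomm (FF n) \<rho> f = RF n m1 m2"
      using coset_join2[OF gcomm_closed[OF rc f] N.subgroup_axioms] by simp
    hence "gcomm (FF n Mod RF n m1 m2) (RF n m1 m2 #>\<^bsub>FF n\<^esub> \<rho>) (RF n m1 m2 #>\<^bsub>FF n\<^esub> f) = \<one>\<^bsub>FF n Mod RF n m1 m2\<^esub>"
      using rc f by (simp add: gcomm_def del: one_FactGroup mult_FactGroup) (simp add: gcomm_def[symmetric])
    thus ?thesis using yf group.gcomm_one_iff[OF P.H.is_group] rc f by simp
  qed
  thus ?thesis using rc by (simp add: group.cent_def[OF P.H.is_group])
qed

theorem mainTheorem8:
  fixes n m1 m2 :: nat
  assumes "n \<ge> 3" and "0 < m1" and "0 < m2" and "m1 dvd m2"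
  defines "F \<equiv> FF n" and "q \<equiv> qord n m1 m2"
  shows
    "(\<forall>i. 1 \<le> i \<and> i \<le> n - 1 \<longrightarrow>
        q (gcomm F (s1 i) (sx i)) dvd m1)
   \<and> (\<forall>i j. 1 \<le> i \<and> i + 1 < j \<and> j \<le> n - 1 \<longrightarrow>
        q (gcomm F (s1 i) (s1 j)) dvd m2
      \<and> q (gcomm F (sx i) (sx j) \<otimes>\<^bsub>F\<^esub> inv\<^bsub>F\<^esub> (gcomm F (s1 i) (s1 j))) dvd m1
      \<and> q (gcomm F (sx i) (s1 j) \<otimes>\<^bsub>F\<^esub> inv\<^bsub>F\<^esub> (gcomm F (sx i) (sx j))) dvd m1
      \<and> q (gcomm F (s1 i) (sx j) \<otimes>\<^bsub>F\<^esub> inv\<^bsub>F\<^esub> (gcomm F (sx i) (sx j))) dvd m1)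
   \<and> (\<forall>i. 1 \<le> i \<and> i \<le> n - 2 \<longrightarrow>
        q (gcomm F (s1 i) (sx (i+1)) \<otimes>\<^bsub>F\<^esub> inv\<^bsub>F\<^esub> (gcomm F (sx i) (s1 (i+1)))) dvd m1
      \<and> q (gcomm F (sx i) (sx (i+1)) \<otimes>\<^bsub>F\<^esub> inv\<^bsub>F\<^esub> (gcomm F (sx i) (s1 (i+1)))) dvd m1)
   \<and> (\<forall>i. 1 \<le> i \<and> i \<le> n - 2 \<longrightarrow>
        q (gcomm3 F (s1 i) (s1 (i+1)) (s1 i)) dvd m2
      \<and> q (gcomm3 F (s1 i) (s1 (i+1)) (s1 (i+1) \<otimes>\<^bsub>F\<^esub> inv\<^bsub>F\<^esub> (s1 i)))
          dvd gcd m2 (m2 choose 2)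
      \<and> q (gcomm3 F (s1 i) (s1 (i+1)) (sx i \<otimes>\<^bsub>F\<^esub> inv\<^bsub>F\<^esub> (s1 i))) dvd m1
      \<and> q (gcomm3 F (s1 i) (s1 (i+1))
            (sx i \<otimes>\<^bsub>F\<^esub> inv\<^bsub>F\<^esub> (sx (i+1)) \<otimes>\<^bsub>F\<^esub>
             inv\<^bsub>F\<^esub> (s1 i \<otimes>\<^bsub>F\<^esub> inv\<^bsub>F\<^esub> (s1 (i+1)))))
          dvd gcd m1 (m1 choose 2))
   \<and> (\<forall>i. 1 \<le> i \<and> i \<le> n - 3 \<longrightarrow>
        q (gcomm4 F (s1 i) (s1 (i+1)) (s1 (i+2)) (s1 (i+1))) dvd gcd 2 m2
      \<and> q (gcomm4 F (s1 i) (s1 (i+1)) (s1 (i+2)) (sx (i+1) \<otimes>\<^bsub>F\<^esub> inv\<^bsub>F\<^esub> (s1 (i+1))))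
          dvd gcd 2 m1)"
proof -
  have n3: "n \<ge> 3" and dv: "m1 dvd m2" using assms(1,4) .
  interpret FG: group "FF n" by (rule group_FF)
  interpret N: normal "RF n m1 m2" "FF n" by (rule RF_normal[OF n3])
  define Q where "Q = FF n Mod RF n m1 m2"
  define h where "h = (\<lambda>x. RF n m1 m2 #>\<^bsub>FF n\<^esub> x)"
  have gQ: "group Q" unfolding Q_def by (rule N.factorgroup_is_group)
  interpret P: group_hom "FF n" Q h
    unfolding group_hom_def group_hom_axioms_def
    using FG.is_group gQ N.r_coset_hom_Mod by (simp add: Q_def h_def)
  have suff: "q w dvd k" if w: "w \<in> carrier (FF n)" and e: "h w [^]\<^bsub>Q\<^esub> (k::nat) = \<one>\<^bsub>Q\<^esub>" for w k
  proof -
    have "q w = group.ord Q (h w)" by (simp add: q_def qord_def Q_def h_def)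
    thus ?thesis using group.pow_eq_id[OF gQ P.hom_closed[OF w]] e by simp
  qed
  have cQ: "group.cent Q (h \<rho>)" if r: "\<rho> \<in> relators n m1 m2" for \<rho>
    using quot_cent[OF n3 nc_incl[OF group_FF relators_carrier[OF n3] r, folded RR_def]] by (simp add: Q_def h_def)
  have hg: "h (gcomm (FF n) x y) = gcomm Q (h x) (h y)" if "x \<in> carrier (FF n)" "y \<in> carrier (FF n)" for x y
    using that by (simp add: gcomm_def)
  have hg3: "h (gcomm3 (FF n) x y z) = gcomm3 Q (h x) (h y) (h z)"
    if "x \<in> carrier (FF n)" "y \<in> carrier (FF n)" "z \<in> carrier (FF n)" for x y z
    using that by (simp add: gcomm3_def hg)
  have hg4: "h (gcomm4 (FF n) x y z w) = gcomm4 Q (h x) (h y) (h z) (h w)"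
    if "x \<in> carrier (FF n)" "y \<in> carrier (FF n)" "z \<in> carrier (FF n)" "w \<in> carrier (FF n)" for x y z w
    using that by (simp add: gcomm4_def hg gcomm3_def)
  define S where "S i b = h (sg i b)" for i b
  have sc: "sg i b \<in> carrier (FF n)" if "1 \<le> i" "i \<le> n - 1" for i b using sg_carrier[OF that] .
  have Sc: "S i b \<in> carrier Q" if "1 \<le> i" "i \<le> n - 1" for i b using sc[OF that] by (simp add: S_def)
  note push = hg hg3 hg4 P.hom_mult P.hom_inv P.hom_nat_pow S_def[symmetric]
  have R1: "group.cent Q (S i False [^]\<^bsub>Q\<^esub> m1 \<otimes>\<^bsub>Q\<^esub> inv\<^bsub>Q\<^esub> (S i True [^]\<^bsub>Q\<^esub> m1))" if "1 \<le> i" "i \<le> n - 1" for i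
  proof -
    have "s1 i [^]\<^bsub>FF n\<^esub> m1 \<otimes>\<^bsub>FF n\<^esub> inv\<^bsub>FF n\<^esub> (sx i [^]\<^bsub>FF n\<^esub> m1) \<in> relators n m1 m2"
      unfolding relators_def using that by blast
    from cQ[OF this] show ?thesis using sc[OF that] by (simp add: push)
  qed
  have R2: "group.cent Q (S i True [^]\<^bsub>Q\<^esub> m2)" if "1 \<le> i" "i \<le> n - 1" for i
  proof -
    have "sx i [^]\<^bsub>FF n\<^esub> m2 \<in> relators n m1 m2" unfolding relators_def using that by blast
    from cQ[OF this] show ?thesis using sc[OF that] by (simp add: push)
  qed
  have R3: "group.cent Q (gcomm Q (S i False) (S i True))" if "1 \<le> i" "i \<le> n - 1" for i
  proof -
    have "gcomm (FF n) (s1 i) (sx i) \<in> relators n m1 m2" unfolding relators_def using that by blast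
    from cQ[OF this] show ?thesis using sc[OF that] by (simp add: push)
  qed
  have R4: "group.cent Q (gcomm Q (S i a) (S j b))" if "1 \<le> i" "i + 1 < j" "j \<le> n - 1" for i j a b
  proof -
    have "gcomm (FF n) (sg i a) (sg j b) \<in> relators n m1 m2" unfolding relators_def using that by blast
    note mem = this
    have "i \<le> n - 1" "1 \<le> j" using that by auto
    thus ?thesis using cQ[OF mem] sc that by (simp add: push)
  qed
  have R5: "group.cent Q (gcomm Q (inv\<^bsub>Q\<^esub> (S i a)) (inv\<^bsub>Q\<^esub> (S (i+1) True)) \<otimes>\<^bsub>Q\<^esub> inv\<^bsub>Q\<^esub> (gcomm Q (S i True) (S (i+1) False)))"
    if "1 \<le> i" "i \<le> n - 2" for i a
  proof -
    have "gcomm (FF n) (inv\<^bsub>FF n\<^esub> (sg i a)) (inv\<^bsub>FF n\<^esub> (sx (i+1))) \<otimes>\<^bsub>FF n\<^esub>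
          inv\<^bsub>FF n\<^esub> (gcomm (FF n) (sx i) (s1 (i+1))) \<in> relators n m1 m2" unfolding relators_def using that by blast
    note mem = this
    have "i \<le> n - 1" "1 \<le> i + 1" "i + 1 \<le> n - 1" using that by auto
    thus ?thesis using cQ[OF mem] sc that by (simp add: push)
  qed
  have R6a: "group.cent Q (gcomm Q (gcomm Q (S i a) (S (i+1) False)) (S i False))" if "1 \<le> i" "i \<le> n - 2" for i a
  proof -
    have "gcomm3 (FF n) (sg i a) (s1 (i+1)) (s1 i) \<in> relators n m1 m2" unfolding relators_def using that by blast
    note mem = this
    have "i \<le> n - 1" "1 \<le> i + 1" "i + 1 \<le> n - 1" using that by auto
    thus ?thesis using cQ[OF mem] sc that by (simp add: push gcomm3_def)
  qed
  have R6b: "group.cent Q (gcomm Q (gcomm Q (S i a) (S (i+1) False)) (S (i+1) False))" if "1 \<le> i" "i \<le> n - 2" for i a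
  proof -
    have "gcomm3 (FF n) (sg i a) (s1 (i+1)) (s1 (i+1)) \<in> relators n m1 m2" unfolding relators_def using that by blast
    note mem = this
    have "i \<le> n - 1" "1 \<le> i + 1" "i + 1 \<le> n - 1" using that by auto
    thus ?thesis using cQ[OF mem] sc that by (simp add: push gcomm3_def)
  qed
  have R7: "group.cent Q (gcomm Q (gcomm Q (S i a) (S (i+1) False)) (gcomm Q (S (i+1) b) (S (i+2) False)))"
    if "1 \<le> i" "i \<le> n - 3" for i a b
  proof -
    have "gcomm (FF n) (gcomm (FF n) (sg i a) (s1 (i+1))) (gcomm (FF n) (sg (i+1) b) (s1 (i+2))) \<in> relators n m1 m2"
      unfolding relators_def using that by blast
    note mem = this
    have "i \<le> n - 1" "1 \<le> i + 1" "i + 1 \<le> n - 1" "1 \<le> i + 2" "i + 2 \<le> n - 1" using that by auto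
    thus ?thesis using cQ[OF mem] sc that by (simp add: push)
  qed

  have A1: "\<forall>i. 1 \<le> i \<and> i \<le> n - 1 \<longrightarrow> q (gcomm F (s1 i) (sx i)) dvd m1"
  proof (intro allI impI)
    fix i assume i: "1 \<le> i \<and> i \<le> n - 1"
    have e: "gcomm Q (S i False) (S i True) [^]\<^bsub>Q\<^esub> m1 = \<one>\<^bsub>Q\<^esub>"
      using group.claim1[OF gQ Sc Sc R3 R1] i by blast
    have "h (gcomm (FF n) (s1 i) (sx i)) [^]\<^bsub>Q\<^esub> m1 = \<one>\<^bsub>Q\<^esub>" using e sc i by (simp add: push)
    thus "q (gcomm F (s1 i) (sx i)) dvd m1" using suff sc i by (simp add: F_def)
  qed
  have A2: "\<forall>i j. 1 \<le> i \<and> i + 1 < j \<and> j \<le> n - 1 \<longrightarrow>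
        q (gcomm F (s1 i) (s1 j)) dvd m2
      \<and> q (gcomm F (sx i) (sx j) \<otimes>\<^bsub>F\<^esub> inv\<^bsub>F\<^esub> (gcomm F (s1 i) (s1 j))) dvd m1
      \<and> q (gcomm F (sx i) (s1 j) \<otimes>\<^bsub>F\<^esub> inv\<^bsub>F\<^esub> (gcomm F (sx i) (sx j))) dvd m1
      \<and> q (gcomm F (s1 i) (sx j) \<otimes>\<^bsub>F\<^esub> inv\<^bsub>F\<^esub> (gcomm F (sx i) (sx j))) dvd m1"
  proof (intro allI impI)
    fix i j assume ij: "1 \<le> i \<and> i + 1 < j \<and> j \<le> n - 1"
    have i: "1 \<le> i" "i \<le> n - 1" and j: "1 \<le> j" "j \<le> n - 1" using ij by auto
    have C: "gcomm Q (S i False) (S j False) [^]\<^bsub>Q\<^esub> m2 = \<one>\<^bsub>Q\<^esub>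
      \<and> (gcomm Q (S i True) (S j True) \<otimes>\<^bsub>Q\<^esub> inv\<^bsub>Q\<^esub> (gcomm Q (S i False) (S j False))) [^]\<^bsub>Q\<^esub> m1 = \<one>\<^bsub>Q\<^esub>
      \<and> (gcomm Q (S i True) (S j False) \<otimes>\<^bsub>Q\<^esub> inv\<^bsub>Q\<^esub> (gcomm Q (S i True) (S j True))) [^]\<^bsub>Q\<^esub> m1 = \<one>\<^bsub>Q\<^esub>
      \<and> (gcomm Q (S i False) (S j True) \<otimes>\<^bsub>Q\<^esub> inv\<^bsub>Q\<^esub> (gcomm Q (S i True) (S j True))) [^]\<^bsub>Q\<^esub> m1 = \<one>\<^bsub>Q\<^esub>"
      using group.claim2[OF gQ Sc[OF i] Sc[OF i] Sc[OF j] Sc[OF j] R4 R4 R4 R4 R1[OF i] R1[OF j] R2[OF i] dv] ij by blast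
    have e: "h (gcomm (FF n) (s1 i) (s1 j)) [^]\<^bsub>Q\<^esub> m2 = \<one>\<^bsub>Q\<^esub>
      \<and> h (gcomm (FF n) (sx i) (sx j) \<otimes>\<^bsub>FF n\<^esub> inv\<^bsub>FF n\<^esub> (gcomm (FF n) (s1 i) (s1 j))) [^]\<^bsub>Q\<^esub> m1 = \<one>\<^bsub>Q\<^esub>
      \<and> h (gcomm (FF n) (sx i) (s1 j) \<otimes>\<^bsub>FF n\<^esub> inv\<^bsub>FF n\<^esub> (gcomm (FF n) (sx i) (sx j))) [^]\<^bsub>Q\<^esub> m1 = \<one>\<^bsub>Q\<^esub>
      \<and> h (gcomm (FF n) (s1 i) (sx j) \<otimes>\<^bsub>FF n\<^esub> inv\<^bsub>FF n\<^esub> (gcomm (FF n) (sx i) (sx j))) [^]\<^bsub>Q\<^esub> m1 = \<one>\<^bsub>Q\<^esub>"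
      using C sc[OF i] sc[OF j] by (simp add: push)
    thus "q (gcomm F (s1 i) (s1 j)) dvd m2
      \<and> q (gcomm F (sx i) (sx j) \<otimes>\<^bsub>F\<^esub> inv\<^bsub>F\<^esub> (gcomm F (s1 i) (s1 j))) dvd m1
      \<and> q (gcomm F (sx i) (s1 j) \<otimes>\<^bsub>F\<^esub> inv\<^bsub>F\<^esub> (gcomm F (sx i) (sx j))) dvd m1
      \<and> q (gcomm F (s1 i) (sx j) \<otimes>\<^bsub>F\<^esub> inv\<^bsub>F\<^esub> (gcomm F (sx i) (sx j))) dvd m1"
      unfolding F_def
      apply (intro conjI suff)
      using e sc[OF i] sc[OF j] by simp_all
  qed
  have A34: "(\<forall>i. 1 \<le> i \<and> i \<le> n - 2 \<longrightarrow>
        q (gcomm F (s1 i) (sx (i+1)) \<otimes>\<^bsub>F\<^esub> inv\<^bsub>F\<^esub> (gcomm F (sx i) (s1 (i+1)))) dvd m1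
      \<and> q (gcomm F (sx i) (sx (i+1)) \<otimes>\<^bsub>F\<^esub> inv\<^bsub>F\<^esub> (gcomm F (sx i) (s1 (i+1)))) dvd m1)
   \<and> (\<forall>i. 1 \<le> i \<and> i \<le> n - 2 \<longrightarrow>
        q (gcomm3 F (s1 i) (s1 (i+1)) (s1 i)) dvd m2
      \<and> q (gcomm3 F (s1 i) (s1 (i+1)) (s1 (i+1) \<otimes>\<^bsub>F\<^esub> inv\<^bsub>F\<^esub> (s1 i)))
          dvd gcd m2 (m2 choose 2)
      \<and> q (gcomm3 F (s1 i) (s1 (i+1)) (sx i \<otimes>\<^bsub>F\<^esub> inv\<^bsub>F\<^esub> (s1 i))) dvd m1
      \<and> q (gcomm3 F (s1 i) (s1 (i+1))
            (sx i \<otimes>\<^bsub>F\<^esub> inv\<^bsub>F\<^esub> (sx (i+1)) \<otimes>\<^bsub>F\<^esub>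
             inv\<^bsub>F\<^esub> (s1 i \<otimes>\<^bsub>F\<^esub> inv\<^bsub>F\<^esub> (s1 (i+1)))))
          dvd gcd m1 (m1 choose 2))"
  proof -
    have X: "q (gcomm F (s1 i) (sx (i+1)) \<otimes>\<^bsub>F\<^esub> inv\<^bsub>F\<^esub> (gcomm F (sx i) (s1 (i+1)))) dvd m1
      \<and> q (gcomm F (sx i) (sx (i+1)) \<otimes>\<^bsub>F\<^esub> inv\<^bsub>F\<^esub> (gcomm F (sx i) (s1 (i+1)))) dvd m1
      \<and> q (gcomm3 F (s1 i) (s1 (i+1)) (s1 i)) dvd m2
      \<and> q (gcomm3 F (s1 i) (s1 (i+1)) (s1 (i+1) \<otimes>\<^bsub>F\<^esub> inv\<^bsub>F\<^esub> (s1 i)))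
          dvd gcd m2 (m2 choose 2)
      \<and> q (gcomm3 F (s1 i) (s1 (i+1)) (sx i \<otimes>\<^bsub>F\<^esub> inv\<^bsub>F\<^esub> (s1 i))) dvd m1
      \<and> q (gcomm3 F (s1 i) (s1 (i+1))
            (sx i \<otimes>\<^bsub>F\<^esub> inv\<^bsub>F\<^esub> (sx (i+1)) \<otimes>\<^bsub>F\<^esub>
             inv\<^bsub>F\<^esub> (s1 i \<otimes>\<^bsub>F\<^esub> inv\<^bsub>F\<^esub> (s1 (i+1)))))
          dvd gcd m1 (m1 choose 2)" if ii: "1 \<le> i" "i \<le> n - 2" for i
    proof -
      have i: "1 \<le> i" "i \<le> n - 1" and i1: "1 \<le> i + 1" "i + 1 \<le> n - 1" using ii by auto
      note C = group.claim34[OF gQ Sc[OF i] Sc[OF i] Sc[OF i1] Sc[OF i1] R1[OF i] R1[OF i1] R2[OF i] R2[OF i1]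
          R3[OF i] R3[OF i1] R5[OF ii] R5[OF ii] R6a[OF ii] R6a[OF ii] R6b[OF ii] R6b[OF ii] dv]
      have e: "h (gcomm (FF n) (s1 i) (sx (i+1)) \<otimes>\<^bsub>FF n\<^esub> inv\<^bsub>FF n\<^esub> (gcomm (FF n) (sx i) (s1 (i+1)))) [^]\<^bsub>Q\<^esub> m1 = \<one>\<^bsub>Q\<^esub>
        \<and> h (gcomm (FF n) (sx i) (sx (i+1)) \<otimes>\<^bsub>FF n\<^esub> inv\<^bsub>FF n\<^esub> (gcomm (FF n) (sx i) (s1 (i+1)))) [^]\<^bsub>Q\<^esub> m1 = \<one>\<^bsub>Q\<^esub>
        \<and> h (gcomm3 (FF n) (s1 i) (s1 (i+1)) (s1 i)) [^]\<^bsub>Q\<^esub> m2 = \<one>\<^bsub>Q\<^esub>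
        \<and> h (gcomm3 (FF n) (s1 i) (s1 (i+1)) (s1 (i+1) \<otimes>\<^bsub>FF n\<^esub> inv\<^bsub>FF n\<^esub> (s1 i))) [^]\<^bsub>Q\<^esub> gcd m2 (m2 choose 2) = \<one>\<^bsub>Q\<^esub>
        \<and> h (gcomm3 (FF n) (s1 i) (s1 (i+1)) (sx i \<otimes>\<^bsub>FF n\<^esub> inv\<^bsub>FF n\<^esub> (s1 i))) [^]\<^bsub>Q\<^esub> m1 = \<one>\<^bsub>Q\<^esub>
        \<and> h (gcomm3 (FF n) (s1 i) (s1 (i+1))
            (sx i \<otimes>\<^bsub>FF n\<^esub> inv\<^bsub>FF n\<^esub> (sx (i+1)) \<otimes>\<^bsub>FF n\<^esub>
             inv\<^bsub>FF n\<^esub> (s1 i \<otimes>\<^bsub>FF n\<^esub> inv\<^bsub>FF n\<^esub> (s1 (i+1))))) [^]\<^bsub>Q\<^esub> gcd m1 (m1 choose 2) = \<one>\<^bsub>Q\<^esub>"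
        using C sc[OF i] sc[OF i1] by (simp add: push)
      have sf: "\<And>w k. w \<in> carrier (FF n) \<and> h w [^]\<^bsub>Q\<^esub> k = \<one>\<^bsub>Q\<^esub> \<Longrightarrow> q w dvd k" using suff by blast
      show ?thesis unfolding F_def
        apply (intro conjI sf)
        using e sc[OF i] sc[OF i1] by (simp_all add: gcomm3_def)
    qed
    show ?thesis using X by blast
  qed
  have A5: "\<forall>i. 1 \<le> i \<and> i \<le> n - 3 \<longrightarrow>
        q (gcomm4 F (s1 i) (s1 (i+1)) (s1 (i+2)) (s1 (i+1))) dvd gcd 2 m2
      \<and> q (gcomm4 F (s1 i) (s1 (i+1)) (s1 (i+2)) (sx (i+1) \<otimes>\<^bsub>F\<^esub> inv\<^bsub>F\<^esub> (s1 (i+1))))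
          dvd gcd 2 m1"
  proof (intro allI impI)
    fix i assume ii: "1 \<le> i \<and> i \<le> n - 3"
    have i: "1 \<le> i" "i \<le> n - 1" and i1: "1 \<le> i + 1" "i + 1 \<le> n - 1" and i2: "1 \<le> i + 2" "i + 2 \<le> n - 1"
      and j: "1 \<le> i" "i \<le> n - 2" and j1: "1 \<le> i + 1" "i + 1 \<le> n - 2" and k: "1 \<le> i" "i \<le> n - 3"
      and far: "1 \<le> i" "i + 1 < i + 2" "i + 2 \<le> n - 1" using ii by auto
    have e22: "i + 1 + 1 = i + 2" by simp
    have s5: "group.cent Q (gcomm Q (inv\<^bsub>Q\<^esub> (S (i+1) a)) (inv\<^bsub>Q\<^esub> (S (i+2) True)) \<otimes>\<^bsub>Q\<^esub> inv\<^bsub>Q\<^esub> (gcomm Q (S (i+1) True) (S (i+2) False)))" for a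
      using R5[OF j1, of a] by (simp only: e22)
    have s6a: "group.cent Q (gcomm Q (gcomm Q (S (i+1) a) (S (i+2) False)) (S (i+1) False))" for a
      using R6a[OF j1, of a] by (simp only: e22)
    have s6b: "group.cent Q (gcomm Q (gcomm Q (S (i+1) a) (S (i+2) False)) (S (i+2) False))" for a
      using R6b[OF j1, of a] by (simp only: e22)
    note C = group.claim5[OF gQ Sc[OF i] Sc[OF i] Sc[OF i1] Sc[OF i1] Sc[OF i2] Sc[OF i2] R1[OF i1] R2[OF i1] dv
      R3[OF i] R3[OF i1] R3[OF i2] R5[OF j] R5[OF j] R6a[OF j] R6a[OF j] R6b[OF j] R6b[OF j]
      s5 s5 s6a s6a s6b s6b R4[OF far] R4[OF far] R7[OF k] R7[OF k] R7[OF k] R7[OF k]]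
    have e: "h (gcomm4 (FF n) (s1 i) (s1 (i+1)) (s1 (i+2)) (s1 (i+1))) [^]\<^bsub>Q\<^esub> gcd 2 m2 = \<one>\<^bsub>Q\<^esub>
      \<and> h (gcomm4 (FF n) (s1 i) (s1 (i+1)) (s1 (i+2)) (sx (i+1) \<otimes>\<^bsub>FF n\<^esub> inv\<^bsub>FF n\<^esub> (s1 (i+1)))) [^]\<^bsub>Q\<^esub> gcd 2 m1 = \<one>\<^bsub>Q\<^esub>"
      using C sc[OF i] sc[OF i1] sc[OF i2] by (simp add: push)
    thus "q (gcomm4 F (s1 i) (s1 (i+1)) (s1 (i+2)) (s1 (i+1))) dvd gcd 2 m2
      \<and> q (gcomm4 F (s1 i) (s1 (i+1)) (s1 (i+2)) (sx (i+1) \<otimes>\<^bsub>F\<^esub> inv\<^bsub>F\<^esub> (s1 (i+1))))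
          dvd gcd 2 m1"
      unfolding F_def
      apply (intro conjI suff)
      using e sc[OF i] sc[OF i1] sc[OF i2] by (simp_all add: gcomm4_def gcomm3_def)
  qed
  show ?thesis using A1 A2 A34 A5 by blast
qed

end
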